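(* Let $1\to A\to B\to C\to1$ be a short exact sequence of groups, $p$ a prime, $j\ge0$, and $\mathcal{T}$ a directed set of subgroups of $B$ (for $U_1,U_2\in\mathcal{T}$ there is $U\in\mathcal{T}$ with $U\subseteq U_1\cap U_2$). Suppose each $H_j(U\cap A,\mathbb{F}_p)$, $U\in\mathcal{T}$, is finite and $\varprojlim_{U\in\mathcal{T}}H_j(U\cap A,\mathbb{F}_p)=0$. Then for every $i\ge0$, $\varprojlim_{U\in\mathcal{T}}H_i\big(U/(U\cap A),H_j(U\cap A,\mathbb{F}_p)\big)=0$.
   Context: All inverse systems are indexed by inclusion in $\mathcal{T}$, with transition maps induced by the inclusions $U_1\subseteq U_2$ (on $U\cap A$ and on $U/(U\cap A)\subseteq C$). The group $U/(U\cap A)$ acts on $H_j(U\cap A,\mathbb{F}_p)$ via conjugation. *)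

theory Defs
  imports "HOL-Algebra.Algebra"
begin

text \<open>Coefficient modules are abelian groups M (HOL-Algebra, written
multiplicatively) with a left action phi of G.  The n-chains are the finitely
supported functions from G^n (lists of length n) to M.\<close>

definition bar_lists :: "('g,'a) monoid_scheme \<Rightarrow> nat \<Rightarrow> 'g list set" where
  "bar_lists G n = {x. length x = n \<and> set x \<subseteq> carrier G}"

definition supp :: "('m,'b) monoid_scheme \<Rightarrow> ('x \<Rightarrow> 'm) \<Rightarrow> 'x set" where
  "supp M f = {x. f x \<noteq> \<one>\<^bsub>M\<^esub>}"

definition bar_chains :: "('g,'a) monoid_scheme \<Rightarrow> ('m,'b) monoid_scheme \<Rightarrow> nat \<Rightarrow> ('g list \<Rightarrow> 'm) monoid" where
  "bar_chains G M n =
     \<lparr> carrier = {f. (\<forall>x. f x \<in> carrier M) \<and> supp M f \<subseteq> bar_lists G n \<and> finite (supp M f)},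
       monoid.mult = (\<lambda>f g x. f x \<otimes>\<^bsub>M\<^esub> g x),
       one = (\<lambda>x. \<one>\<^bsub>M\<^esub>) \<rparr>"

definition single :: "('m,'b) monoid_scheme \<Rightarrow> 'x \<Rightarrow> 'm \<Rightarrow> 'x \<Rightarrow> 'm" where
  "single M x m = (\<lambda>y. if y = x then m else \<one>\<^bsub>M\<^esub>)"

definition bar_face :: "('g,'a) monoid_scheme \<Rightarrow> nat \<Rightarrow> nat \<Rightarrow> 'g list \<Rightarrow> 'g list" where
  "bar_face G n i x =
     (if i = 0 then tl x
      else if i = n then butlast x
      else take (i - 1) x @ [x ! (i - 1) \<otimes>\<^bsub>G\<^esub> x ! i] @ drop (i + 1) x)"

definition bar_coef :: "('g,'a) monoid_scheme \<Rightarrow> ('m,'b) monoid_scheme \<Rightarrow> ('g \<Rightarrow> 'm \<Rightarrow> 'm)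
      \<Rightarrow> nat \<Rightarrow> 'g list \<Rightarrow> 'm \<Rightarrow> 'm" where
  "bar_coef G M \<phi> i x m =
     (if i = 0 then \<phi> (inv\<^bsub>G\<^esub> (hd x)) m
      else if even i then m else inv\<^bsub>M\<^esub> m)"

text \<open>Boundary d_n : C_n \<rightarrow> C_(n-1) (used for n \<ge> 1).\<close>
definition bar_bd :: "('g,'a) monoid_scheme \<Rightarrow> ('m,'b) monoid_scheme \<Rightarrow> ('g \<Rightarrow> 'm \<Rightarrow> 'm)
      \<Rightarrow> nat \<Rightarrow> ('g list \<Rightarrow> 'm) \<Rightarrow> ('g list \<Rightarrow> 'm)" where
  "bar_bd G M \<phi> n f =
     finprod (bar_chains G M (n - 1))
       (\<lambda>x. finprod (bar_chains G M (n - 1))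
              (\<lambda>i. single M (bar_face G n i x) (bar_coef G M \<phi> i x (f x))) {0..n})
       (supp M f)"

definition bar_cycles :: "('g,'a) monoid_scheme \<Rightarrow> ('m,'b) monoid_scheme \<Rightarrow> ('g \<Rightarrow> 'm \<Rightarrow> 'm)
      \<Rightarrow> nat \<Rightarrow> ('g list \<Rightarrow> 'm) set" where
  "bar_cycles G M \<phi> n =
     (if n = 0 then carrier (bar_chains G M 0)
      else {f \<in> carrier (bar_chains G M n). bar_bd G M \<phi> n f = \<one>\<^bsub>bar_chains G M (n - 1)\<^esub>})"

definition bar_boundaries :: "('g,'a) monoid_scheme \<Rightarrow> ('m,'b) monoid_scheme \<Rightarrow> ('g \<Rightarrow> 'm \<Rightarrow> 'm)
      \<Rightarrow> nat \<Rightarrow> ('g list \<Rightarrow> 'm) set" where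
  "bar_boundaries G M \<phi> n = bar_bd G M \<phi> (Suc n) ` carrier (bar_chains G M (Suc n))"

text \<open>H_n(G, M) = Z_n / B_n, as a HOL-Algebra quotient group (elements are cosets).\<close>
definition group_homology :: "('g,'a) monoid_scheme \<Rightarrow> ('m,'b) monoid_scheme \<Rightarrow> ('g \<Rightarrow> 'm \<Rightarrow> 'm)
      \<Rightarrow> nat \<Rightarrow> ('g list \<Rightarrow> 'm) set monoid" where
  "group_homology G M \<phi> n =
     ((bar_chains G M n)\<lparr>carrier := bar_cycles G M \<phi> n\<rparr>) Mod (bar_boundaries G M \<phi> n)"

definition bar_push :: "('g,'a) monoid_scheme \<Rightarrow> ('m,'b) monoid_scheme \<Rightarrow> ('h,'c) monoid_scheme
      \<Rightarrow> ('n,'d) monoid_scheme \<Rightarrow> nat \<Rightarrow> ('g \<Rightarrow> 'h) \<Rightarrow> ('m \<Rightarrow> 'n)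
      \<Rightarrow> ('g list \<Rightarrow> 'm) \<Rightarrow> ('h list \<Rightarrow> 'n)" where
  "bar_push G M G' M' n \<alpha> \<beta> f =
     finprod (bar_chains G' M' n) (\<lambda>x. single M' (map \<alpha> x) (\<beta> (f x))) (supp M f)"

definition homology_map :: "('h,'c) monoid_scheme \<Rightarrow> ('n,'d) monoid_scheme \<Rightarrow> ('h \<Rightarrow> 'n \<Rightarrow> 'n)
      \<Rightarrow> nat \<Rightarrow> (('g list \<Rightarrow> 'm) \<Rightarrow> ('h list \<Rightarrow> 'n)) \<Rightarrow> ('g list \<Rightarrow> 'm) set \<Rightarrow> ('h list \<Rightarrow> 'n) set" where
  "homology_map G' M' \<phi>' n F K =
     bar_boundaries G' M' \<phi>' n #>\<^bsub>bar_chains G' M' n\<^esub> F (SOME k. k \<in> K)"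

text \<open>The inverse limit over T (maps pi U1 U2 : H U1 \<rightarrow> H U2 for U1 \<subseteq> U2) is the
group of compatible families; it is zero iff every compatible family is trivial.\<close>
definition inv_lim_zero :: "'i set set \<Rightarrow> ('i set \<Rightarrow> ('e,'b) monoid_scheme)
      \<Rightarrow> ('i set \<Rightarrow> 'i set \<Rightarrow> 'e \<Rightarrow> 'e) \<Rightarrow> bool" where
  "inv_lim_zero T H \<pi> \<longleftrightarrow>
     (\<forall>x. (\<forall>U\<in>T. x U \<in> carrier (H U)) \<and>
          (\<forall>U1\<in>T. \<forall>U2\<in>T. U1 \<subseteq> U2 \<longrightarrow> \<pi> U1 U2 (x U1) = x U2)
        \<longrightarrow> (\<forall>U\<in>T. x U = \<one>\<^bsub>H U\<^esub>))"

abbreviation Fp :: "nat \<Rightarrow> int set monoid" where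
  "Fp p \<equiv> add_monoid (ZFact (int p))"

definition H_in :: "('g,'a) monoid_scheme \<Rightarrow> 'g set \<Rightarrow> nat \<Rightarrow> nat \<Rightarrow> 'g set
      \<Rightarrow> ('g list \<Rightarrow> int set) set monoid" where
  "H_in B A p j U = group_homology (B\<lparr>carrier := U \<inter> A\<rparr>) (Fp p) (\<lambda>g m. m) j"

definition H_in_map :: "('g,'a) monoid_scheme \<Rightarrow> 'g set \<Rightarrow> nat \<Rightarrow> nat \<Rightarrow> 'g set \<Rightarrow> 'g set
      \<Rightarrow> ('g list \<Rightarrow> int set) set \<Rightarrow> ('g list \<Rightarrow> int set) set" where
  "H_in_map B A p j U1 U2 =
     homology_map (B\<lparr>carrier := U2 \<inter> A\<rparr>) (Fp p) (\<lambda>g m. m) j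
       (bar_push (B\<lparr>carrier := U1 \<inter> A\<rparr>) (Fp p) (B\<lparr>carrier := U2 \<inter> A\<rparr>) (Fp p) j id id)"

definition Quo :: "('g,'a) monoid_scheme \<Rightarrow> 'g set \<Rightarrow> 'g set \<Rightarrow> 'g set monoid" where
  "Quo B A U = (B\<lparr>carrier := U\<rparr>) Mod (U \<inter> A)"

definition conj_act :: "('g,'a) monoid_scheme \<Rightarrow> 'g set \<Rightarrow> nat \<Rightarrow> nat \<Rightarrow> 'g set
      \<Rightarrow> 'g set \<Rightarrow> ('g list \<Rightarrow> int set) set \<Rightarrow> ('g list \<Rightarrow> int set) set" where
  "conj_act B A p j U c =
     (let u = (SOME u. u \<in> c) in
      homology_map (B\<lparr>carrier := U \<inter> A\<rparr>) (Fp p) (\<lambda>g m. m) j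
        (bar_push (B\<lparr>carrier := U \<inter> A\<rparr>) (Fp p) (B\<lparr>carrier := U \<inter> A\<rparr>) (Fp p) j
           (\<lambda>g. u \<otimes>\<^bsub>B\<^esub> g \<otimes>\<^bsub>B\<^esub> inv\<^bsub>B\<^esub> u) id))"

definition H_out :: "('g,'a) monoid_scheme \<Rightarrow> 'g set \<Rightarrow> nat \<Rightarrow> nat \<Rightarrow> nat \<Rightarrow> 'g set
      \<Rightarrow> ('g set list \<Rightarrow> ('g list \<Rightarrow> int set) set) set monoid" where
  "H_out B A p i j U = group_homology (Quo B A U) (H_in B A p j U) (conj_act B A p j U) i"

definition H_out_map :: "('g,'a) monoid_scheme \<Rightarrow> 'g set \<Rightarrow> nat \<Rightarrow> nat \<Rightarrow> nat \<Rightarrow> 'g set \<Rightarrow> 'g set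
      \<Rightarrow> ('g set list \<Rightarrow> ('g list \<Rightarrow> int set) set) set
      \<Rightarrow> ('g set list \<Rightarrow> ('g list \<Rightarrow> int set) set) set" where
  "H_out_map B A p i j U1 U2 =
     homology_map (Quo B A U2) (H_in B A p j U2) (conj_act B A p j U2) i
       (bar_push (Quo B A U1) (H_in B A p j U1) (Quo B A U2) (H_in B A p j U2) i
          (\<lambda>c. (U2 \<inter> A) <#>\<^bsub>B\<^esub> c) (H_in_map B A p j U1 U2))"

end

theory Submission
  imports Defs "HOL-Analysis.Analysis"
begin

lemma directed_lb:
  assumes dir: "\<forall>U1\<in>T. \<forall>U2\<in>T. \<exists>U\<in>T. U \<subseteq> U1 \<inter> U2"
    and "finite I" "I \<subseteq> T" "U0 \<in> T"
  shows "\<exists>W\<in>T. W \<subseteq> U0 \<and> (\<forall>U\<in>I. W \<subseteq> U)"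
  using assms(2,3)
proof (induction I rule: finite_induct)
  case empty then show ?case using assms(4) by blast
next
  case (insert a I)
  then obtain W where W: "W \<in> T" "W \<subseteq> U0" "\<forall>U\<in>I. W \<subseteq> U" by auto
  have "a \<in> T" using insert.prems by blast
  then obtain W' where W': "W' \<in> T" "W' \<subseteq> W \<inter> a" using dir \<open>W \<in> T\<close> by blast
  show ?case by (rule bexI[of _ W']) (use W W' in auto)
qed

lemma mittag_leffler_zero:
  fixes H :: "'i set \<Rightarrow> ('e,'b) monoid_scheme" and \<pi> :: "'i set \<Rightarrow> 'i set \<Rightarrow> 'e \<Rightarrow> 'e"
  assumes dir: "\<forall>U1\<in>T. \<forall>U2\<in>T. \<exists>U\<in>T. U \<subseteq> U1 \<inter> U2"
  and fin: "\<forall>U\<in>T. finite (carrier (H U))"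
  and one: "\<forall>U\<in>T. \<one>\<^bsub>H U\<^esub> \<in> carrier (H U)"
  and cl: "\<And>U1 U2 y. U1\<in>T \<Longrightarrow> U2\<in>T \<Longrightarrow> U1\<subseteq>U2 \<Longrightarrow> y\<in>carrier(H U1) \<Longrightarrow> \<pi> U1 U2 y \<in> carrier (H U2)"
  and fn: "\<And>U1 U2 U3 y. U1\<in>T \<Longrightarrow> U2\<in>T \<Longrightarrow> U3\<in>T \<Longrightarrow> U1\<subseteq>U2 \<Longrightarrow> U2\<subseteq>U3 \<Longrightarrow> y\<in>carrier(H U1)
           \<Longrightarrow> \<pi> U2 U3 (\<pi> U1 U2 y) = \<pi> U1 U3 y"
  and lim: "inv_lim_zero T H \<pi>"
  and U0: "U0 \<in> T"
  shows "\<exists>V\<in>T. V \<subseteq> U0 \<and> (\<forall>y\<in>carrier (H V). \<pi> V U0 y = \<one>\<^bsub>H U0\<^esub>)"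
proof (rule ccontr)
  assume "\<not> ?thesis"
  then have bad: "\<And>V. V \<in> T \<Longrightarrow> V \<subseteq> U0 \<Longrightarrow> \<exists>y\<in>carrier (H V). \<pi> V U0 y \<noteq> \<one>\<^bsub>H U0\<^esub>" by blast
  define Tp where "Tp = product_topology (\<lambda>U. discrete_topology (carrier (H U))) T"
  have cX: "compact_space Tp"
    unfolding Tp_def compact_space_product_topology compact_space_discrete_topology using fin by blast
  have top: "topspace Tp = (\<Pi>\<^sub>E U\<in>T. carrier (H U))" by (simp add: Tp_def)
  have pcl: "closedin Tp {x \<in> topspace Tp. x U \<in> S}" if "U \<in> T" "S \<subseteq> carrier (H U)" for U S
  proof -
    have "continuous_map Tp (discrete_topology (carrier (H U))) (\<lambda>x. x U)"
      unfolding Tp_def using that(1) by (rule continuous_map_product_projection)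
    then show ?thesis by (rule closedin_continuous_map_preimage) (use that in simp)
  qed
  define D where "D = {x \<in> topspace Tp. x U0 \<in> carrier (H U0) - {\<one>\<^bsub>H U0\<^esub>}}"
  define C where "C = (\<lambda>(U1,U2). {x \<in> topspace Tp. \<pi> U1 U2 (x U1) = x U2})"
  define P where "P = {(U1,U2). U1 \<in> T \<and> U2 \<in> T \<and> U1 \<subseteq> U2}"
  have Ccl: "closedin Tp (C pr)" if "pr \<in> P" for pr
  proof -
    obtain U1 U2 where pr: "pr = (U1,U2)" "U1 \<in> T" "U2 \<in> T" "U1 \<subseteq> U2" using \<open>pr \<in> P\<close> unfolding P_def by (cases pr) auto
    let ?R = "(\<Union>a\<in>carrier (H U1). {x \<in> topspace Tp. x U1 \<in> {a}} \<inter> {x \<in> topspace Tp. x U2 \<in> {\<pi> U1 U2 a}})"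
    have eq: "C pr = ?R"
    proof
      show "C pr \<subseteq> ?R"
      proof
        fix x assume "x \<in> C pr"
        then have "x \<in> topspace Tp \<and> \<pi> U1 U2 (x U1) = x U2" using pr by (simp add: C_def)
        then have "x \<in> topspace Tp" "\<pi> U1 U2 (x U1) = x U2" by blast+
        moreover then have "x U1 \<in> carrier (H U1)" using pr(2) by (simp add: top PiE_iff)
        ultimately show "x \<in> ?R" by (intro UN_I[of "x U1"]) simp_all
      qed
      show "?R \<subseteq> C pr" using pr by (auto simp add: C_def)
    qed
    have "closedin Tp ({x \<in> topspace Tp. x U1 \<in> {a}} \<inter> {x \<in> topspace Tp. x U2 \<in> {\<pi> U1 U2 a}})"
      if "a \<in> carrier (H U1)" for a
      using pr that cl[OF pr(2,3,4) that] by (intro closedin_Int pcl) auto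
    then show ?thesis unfolding eq
      by (intro closedin_Union) (use fin pr in auto)
  qed
  let ?U = "insert D (C ` P)"
  have "closedin Tp D" unfolding D_def by (rule pcl[OF U0]) blast
  then have Ucl: "\<forall>S\<in>?U. closedin Tp S" using Ccl by auto
  have Ufip: "\<forall>F. finite F \<and> F \<subseteq> ?U \<longrightarrow> \<Inter> F \<noteq> {}"
  proof (intro allI impI)
    fix F assume F: "finite F \<and> F \<subseteq> ?U"
    then have "F - {D} \<subseteq> C ` P" "finite (F - {D})" by auto
    then obtain P' where P': "P' \<subseteq> P" "finite P'" "F - {D} = C ` P'"
      by (meson finite_subset_image)
    have fI: "finite (fst ` P' \<union> snd ` P')" using P' by simp
    have sI: "fst ` P' \<union> snd ` P' \<subseteq> T" using P'(1) unfolding P_def by auto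
    obtain W where W: "W \<in> T" "W \<subseteq> U0" "\<forall>U\<in>fst ` P' \<union> snd ` P'. W \<subseteq> U"
      using directed_lb[OF dir fI sI U0] by blast
    obtain y where y: "y \<in> carrier (H W)" "\<pi> W U0 y \<noteq> \<one>\<^bsub>H U0\<^esub>" using bad W(1,2) by blast
    define x where "x = (\<lambda>U. if U \<in> T then (if W \<subseteq> U then \<pi> W U y else \<one>\<^bsub>H U\<^esub>) else undefined)"
    have xt: "x \<in> topspace Tp" unfolding top x_def using cl W y one by (auto simp: PiE_iff extensional_def)
    have xD: "x \<in> D" using xt W y U0 cl by (auto simp: D_def x_def)
    have xC: "x \<in> C pr" if prin: "pr \<in> P'" for pr
    proof -
      obtain U1 U2 where pr: "pr = (U1,U2)" "U1 \<in> T" "U2 \<in> T" "U1 \<subseteq> U2"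
        using prin P'(1) unfolding P_def by (cases pr) auto
      have "U1 \<in> fst ` P'" "U2 \<in> snd ` P'" using prin pr(1) by (metis fst_conv image_eqI, metis snd_conv image_eqI)
      then have "W \<subseteq> U1" "W \<subseteq> U2" using W(3) by auto
      then show ?thesis using pr xt fn[of W U1 U2 y] W y by (auto simp: C_def x_def)
    qed
    have "x \<in> S" if "S \<in> F" for S
    proof (cases "S = D")
      case True then show ?thesis using xD by simp
    next
      case False
      then have "S \<in> C ` P'" using that P'(3) by auto
      then show ?thesis using xC by auto
    qed
    then have "x \<in> \<Inter>F" by (rule InterI)
    then show "\<Inter>F \<noteq> {}" by auto
  qed
  have "\<Inter>?U \<noteq> {}" using cX Ucl Ufip unfolding compact_space_fip by blast
  then obtain x where x: "x \<in> \<Inter>?U" by blast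
  then have "x \<in> D" by blast
  have xt: "x \<in> topspace Tp" using \<open>x \<in> D\<close> by (auto simp: D_def)
  have "(\<forall>U\<in>T. x U \<in> carrier (H U)) \<and> (\<forall>U1\<in>T. \<forall>U2\<in>T. U1 \<subseteq> U2 \<longrightarrow> \<pi> U1 U2 (x U1) = x U2)"
  proof (intro conjI ballI impI)
    show "x U \<in> carrier (H U)" if "U \<in> T" for U using xt that by (auto simp: top)
    fix U1 U2 assume "U1 \<in> T" "U2 \<in> T" "U1 \<subseteq> U2"
    then have "(U1,U2) \<in> P" by (auto simp: P_def)
    then have "x \<in> C (U1,U2)" using x by blast
    then show "\<pi> U1 U2 (x U1) = x U2" by (auto simp: C_def)
  qed
  then have "\<forall>U\<in>T. x U = \<one>\<^bsub>H U\<^esub>" using lim unfolding inv_lim_zero_def by blast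
  then show False using \<open>x \<in> D\<close> U0 by (auto simp: D_def)
qed


section \<open>Chains\<close>

lemma chains_simps:
  "carrier (bar_chains G M n) = {f. (\<forall>x. f x \<in> carrier M) \<and> supp M f \<subseteq> bar_lists G n \<and> finite (supp M f)}"
  "monoid.mult (bar_chains G M n) = (\<lambda>f g x. f x \<otimes>\<^bsub>M\<^esub> g x)"
  "one (bar_chains G M n) = (\<lambda>x. \<one>\<^bsub>M\<^esub>)"
  by (simp_all add: bar_chains_def)

lemma chains_mem:
  "f \<in> carrier (bar_chains G M n) \<longleftrightarrow> (\<forall>x. f x \<in> carrier M) \<and> supp M f \<subseteq> bar_lists G n \<and> finite (supp M f)"
  by (simp add: chains_simps)

lemma supp_mult_sub: "supp M (\<lambda>x. f x \<otimes>\<^bsub>M\<^esub> g x) \<subseteq> supp M f \<union> supp M g"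
  if "monoid M" "\<forall>x. f x \<in> carrier M" "\<forall>x. g x \<in> carrier M"
  using that by (auto simp: supp_def monoid.l_one)

lemma chains_comm_group:
  assumes M: "comm_group M"
  shows "comm_group (bar_chains G M n)"
proof -
  interpret M: comm_group M by (rule M)
  show ?thesis
  proof (rule comm_groupI)
    fix x y assume x: "x \<in> carrier (bar_chains G M n)" and y: "y \<in> carrier (bar_chains G M n)"
    have s: "supp M (\<lambda>z. x z \<otimes>\<^bsub>M\<^esub> y z) \<subseteq> supp M x \<union> supp M y"
      using x y by (intro supp_mult_sub) (auto simp: chains_mem M.monoid_axioms)
    show "x \<otimes>\<^bsub>bar_chains G M n\<^esub> y \<in> carrier (bar_chains G M n)"
      using x y s unfolding chains_mem chains_simps by (auto intro: finite_subset)
    show "x \<otimes>\<^bsub>bar_chains G M n\<^esub> y = y \<otimes>\<^bsub>bar_chains G M n\<^esub> x"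
      using x y unfolding chains_mem chains_simps by (auto simp: M.m_comm)
  next
    show "\<one>\<^bsub>bar_chains G M n\<^esub> \<in> carrier (bar_chains G M n)"
      by (simp add: chains_simps supp_def)
  next
    fix x y z assume "x \<in> carrier (bar_chains G M n)" "y \<in> carrier (bar_chains G M n)" "z \<in> carrier (bar_chains G M n)"
    then show "x \<otimes>\<^bsub>bar_chains G M n\<^esub> y \<otimes>\<^bsub>bar_chains G M n\<^esub> z = x \<otimes>\<^bsub>bar_chains G M n\<^esub> (y \<otimes>\<^bsub>bar_chains G M n\<^esub> z)"
      unfolding chains_mem chains_simps by (auto simp: M.m_assoc)
  next
    fix x assume "x \<in> carrier (bar_chains G M n)"
    then show "\<one>\<^bsub>bar_chains G M n\<^esub> \<otimes>\<^bsub>bar_chains G M n\<^esub> x = x"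
      unfolding chains_mem chains_simps by auto
  next
    fix x assume x: "x \<in> carrier (bar_chains G M n)"
    define y where "y = (\<lambda>z. inv\<^bsub>M\<^esub> x z)"
    have "supp M y = supp M x" using x unfolding y_def supp_def chains_mem
      by (auto simp: M.inv_eq_one_eq)
    then have "y \<in> carrier (bar_chains G M n)" using x unfolding chains_mem y_def by auto
    moreover have "y \<otimes>\<^bsub>bar_chains G M n\<^esub> x = \<one>\<^bsub>bar_chains G M n\<^esub>"
      using x unfolding chains_mem chains_simps y_def by auto
    ultimately show "\<exists>y\<in>carrier (bar_chains G M n). y \<otimes>\<^bsub>bar_chains G M n\<^esub> x = \<one>\<^bsub>bar_chains G M n\<^esub>"
      by blast
  qed
qed

lemma supp_single: "supp M (single M y m) \<subseteq> {y}"
  by (auto simp: supp_def single_def)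

lemma single_carrier:
  assumes "monoid M" "y \<in> bar_lists G n" "m \<in> carrier M"
  shows "single M y m \<in> carrier (bar_chains G M n)"
proof -
  have "finite (supp M (single M y m))" by (rule finite_subset[OF supp_single]) simp
  then show ?thesis using assms supp_single[of M y m] unfolding chains_mem
    by (auto simp: single_def monoid.one_closed)
qed

lemma single_one: "single M y \<one>\<^bsub>M\<^esub> = \<one>\<^bsub>bar_chains G M n\<^esub>"
  by (auto simp: single_def chains_simps)

lemma single_mult:
  assumes "monoid M" "a \<in> carrier M" "b \<in> carrier M"
  shows "single M y (a \<otimes>\<^bsub>M\<^esub> b) = single M y a \<otimes>\<^bsub>bar_chains G M n\<^esub> single M y b"
  using assms by (simp add: single_def chains_simps monoid.l_one monoid.one_closed fun_eq_iff)

lemma chains_eval_finprod: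
  assumes M: "comm_group M" and g: "g \<in> S \<rightarrow> carrier (bar_chains G M n)"
  shows "finprod (bar_chains G M n) g S y = finprod M (\<lambda>s. g s y) S"
  using g
proof (induction S rule: infinite_finite_induct)
  case (infinite A)
  interpret C: comm_group "bar_chains G M n" using chains_comm_group[OF M] .
  interpret M: comm_group M by (rule M)
  show ?case using infinite by (simp add: chains_simps)
next
  case empty
  interpret C: comm_group "bar_chains G M n" using chains_comm_group[OF M] .
  interpret M: comm_group M by (rule M)
  show ?case by (simp add: chains_simps)
next
  case (insert a A)
  interpret C: comm_group "bar_chains G M n" using chains_comm_group[OF M] .
  interpret M: comm_group M by (rule M)
  have ga: "g a \<in> carrier (bar_chains G M n)" and gA: "g \<in> A \<rightarrow> carrier (bar_chains G M n)"
    using insert by auto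
  have "(\<lambda>s. g s y) \<in> A \<rightarrow> carrier M"
  proof
    fix s assume "s \<in> A" then have "g s \<in> carrier (bar_chains G M n)" using gA by blast
    then show "g s y \<in> carrier M" by (simp add: chains_mem)
  qed
  moreover have "g a y \<in> carrier M" using ga by (simp add: chains_mem)
  moreover have "finprod (bar_chains G M n) g (insert a A) = g a \<otimes>\<^bsub>bar_chains G M n\<^esub> finprod (bar_chains G M n) g A"
    using insert ga gA by (intro C.finprod_insert) auto
  ultimately show ?case using insert ga gA by (simp add: chains_simps)
qed

lemma hom_finprod_gen:
  assumes A: "comm_monoid A" and D: "comm_monoid D"
    and hm: "\<And>x y. x \<in> carrier A \<Longrightarrow> y \<in> carrier A \<Longrightarrow> h (x \<otimes>\<^bsub>A\<^esub> y) = h x \<otimes>\<^bsub>D\<^esub> h y"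
    and h1: "h \<one>\<^bsub>A\<^esub> = \<one>\<^bsub>D\<^esub>"
    and hc: "\<And>x. x \<in> carrier A \<Longrightarrow> h x \<in> carrier D"
    and g: "g \<in> S \<rightarrow> carrier A"
  shows "h (finprod A g S) = finprod D (\<lambda>s. h (g s)) S"
  using g
proof (induction S rule: infinite_finite_induct)
  case (infinite S)
  interpret A: comm_monoid A by (rule A)
  interpret D: comm_monoid D by (rule D)
  show ?case using infinite h1 by simp
next
  case empty
  interpret A: comm_monoid A by (rule A)
  interpret D: comm_monoid D by (rule D)
  show ?case using h1 by simp
next
  case (insert a S)
  interpret A: comm_monoid A by (rule A)
  interpret D: comm_monoid D by (rule D)
  have ga: "g a \<in> carrier A" and gS: "g \<in> S \<rightarrow> carrier A" using insert by auto
  have "(\<lambda>s. h (g s)) \<in> S \<rightarrow> carrier D" using gS hc by auto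
  then show ?case using insert ga gS hm hc by simp
qed

lemma finprod_sub:
  assumes G: "comm_monoid G" and H: "comm_monoid H"
    and c: "carrier H \<subseteq> carrier G" and m: "monoid.mult H = monoid.mult G" and o: "one H = one G"
    and f: "f \<in> S \<rightarrow> carrier H"
  shows "finprod H f S = finprod G f S"
  using f
proof (induction S rule: infinite_finite_induct)
  case (infinite S)
  interpret G: comm_monoid G by (rule G)
  interpret H: comm_monoid H by (rule H)
  show ?case using infinite o by simp
next
  case empty
  interpret G: comm_monoid G by (rule G)
  interpret H: comm_monoid H by (rule H)
  show ?case using o by simp
next
  case (insert a S)
  interpret G: comm_monoid G by (rule G)
  interpret H: comm_monoid H by (rule H)
  have fa: "f a \<in> carrier H" and fS: "f \<in> S \<rightarrow> carrier H" using insert by auto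
  have "f \<in> S \<rightarrow> carrier G" "f a \<in> carrier G" using fa fS c by auto
  then show ?case using insert fa fS m by simp
qed

lemma chains_decomp:
  assumes M: "comm_group M" and f: "f \<in> carrier (bar_chains G M n)"
  shows "finprod (bar_chains G M n) (\<lambda>x. single M x (f x)) (supp M f) = f"
proof
  fix y
  interpret M: comm_group M by (rule M)
  have g: "(\<lambda>x. single M x (f x)) \<in> supp M f \<rightarrow> carrier (bar_chains G M n)"
    proof
    fix x assume "x \<in> supp M f"
    then show "single M x (f x) \<in> carrier (bar_chains G M n)"
      using f by (intro single_carrier) (auto simp: chains_mem M.monoid_axioms)
  qed
  have fin: "finite (supp M f)" using f by (simp add: chains_mem)
  have "finprod (bar_chains G M n) (\<lambda>x. single M x (f x)) (supp M f) y
        = finprod M (\<lambda>x. if y = x then f x else \<one>\<^bsub>M\<^esub>) (supp M f)"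
    unfolding chains_eval_finprod[OF M g] by (simp add: single_def)
  also have "\<dots> = f y"
  proof (cases "y \<in> supp M f")
    case True
    then show ?thesis proof -
      have "f \<in> supp M f \<rightarrow> carrier M" using f by (simp add: chains_mem)
      then show ?thesis using M.finprod_singleton[OF True fin, of f] by simp
    qed
  next
    case False
    then have "f y = \<one>\<^bsub>M\<^esub>" by (simp add: supp_def)
    moreover have "finprod M (\<lambda>x. if y = x then f x else \<one>\<^bsub>M\<^esub>) (supp M f) = \<one>\<^bsub>M\<^esub>"
      using False by (intro M.finprod_one_eqI) auto
    ultimately show ?thesis by simp
  qed
  finally show "finprod (bar_chains G M n) (\<lambda>x. single M x (f x)) (supp M f) y = f y" .
qed


definition lin :: "('d,'c) monoid_scheme \<Rightarrow> ('m,'b) monoid_scheme \<Rightarrow> ('x \<Rightarrow> 'm \<Rightarrow> 'd) \<Rightarrow> ('x \<Rightarrow> 'm) \<Rightarrow> 'd" where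
  "lin D M T f = finprod D (\<lambda>x. T x (f x)) (supp M f)"

locale linmap =
  fixes G :: "('g,'a) monoid_scheme" and M :: "('m,'b) monoid_scheme" and n :: nat
    and D :: "('d,'c) monoid_scheme" and T :: "'g list \<Rightarrow> 'm \<Rightarrow> 'd"
  assumes M: "comm_group M" and D: "comm_monoid D"
    and Tc: "\<And>x m. x \<in> bar_lists G n \<Longrightarrow> m \<in> carrier M \<Longrightarrow> T x m \<in> carrier D"
    and T1: "\<And>x. x \<in> bar_lists G n \<Longrightarrow> T x \<one>\<^bsub>M\<^esub> = \<one>\<^bsub>D\<^esub>"
    and Tm: "\<And>x a b. x \<in> bar_lists G n \<Longrightarrow> a \<in> carrier M \<Longrightarrow> b \<in> carrier M \<Longrightarrow>
               T x (a \<otimes>\<^bsub>M\<^esub> b) = T x a \<otimes>\<^bsub>D\<^esub> T x b"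
begin

lemma lin_ext:
  assumes f: "f \<in> carrier (bar_chains G M n)" and S: "finite S" "supp M f \<subseteq> S" "S \<subseteq> bar_lists G n"
  shows "lin D M T f = finprod D (\<lambda>x. T x (f x)) S"
proof -
  interpret D: comm_monoid D by (rule D)
  have fx: "\<And>x. f x \<in> carrier M" using f by (simp add: chains_mem)
  show ?thesis unfolding lin_def
  proof (rule D.finprod_mono_neutral_cong_left[OF S(1,2)])
    fix i assume "i \<in> S - supp M f"
    then have "f i = \<one>\<^bsub>M\<^esub>" "i \<in> bar_lists G n" using S by (auto simp: supp_def)
    then show "T i (f i) = \<one>\<^bsub>D\<^esub>" by (simp add: T1)
  next
    show "(\<lambda>x. T x (f x)) \<in> S \<rightarrow> carrier D" using S(3) fx Tc by auto
  qed simp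
qed

lemma lin_closed:
  assumes f: "f \<in> carrier (bar_chains G M n)"
  shows "lin D M T f \<in> carrier D"
proof -
  interpret D: comm_monoid D by (rule D)
  have "(\<lambda>x. T x (f x)) \<in> supp M f \<rightarrow> carrier D" using f Tc by (auto simp: chains_mem)
  then show ?thesis unfolding lin_def by (rule D.finprod_closed)
qed

lemma lin_mult:
  assumes f: "f \<in> carrier (bar_chains G M n)" and g: "g \<in> carrier (bar_chains G M n)"
  shows "lin D M T (f \<otimes>\<^bsub>bar_chains G M n\<^esub> g) = lin D M T f \<otimes>\<^bsub>D\<^esub> lin D M T g"
proof -
  interpret D: comm_monoid D by (rule D)
  interpret M: comm_group M by (rule M)
  interpret C: comm_group "bar_chains G M n" by (rule chains_comm_group[OF M])
  let ?S = "supp M f \<union> supp M g"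
  have fS: "finite ?S" "?S \<subseteq> bar_lists G n" using f g by (auto simp: chains_mem)
  have fg: "f \<otimes>\<^bsub>bar_chains G M n\<^esub> g \<in> carrier (bar_chains G M n)" using f g by simp
  have sfg: "supp M (f \<otimes>\<^bsub>bar_chains G M n\<^esub> g) \<subseteq> ?S"
    unfolding chains_simps using f g by (intro supp_mult_sub) (auto simp: chains_mem M.monoid_axioms)
  have fx: "\<And>x. f x \<in> carrier M" "\<And>x. g x \<in> carrier M" using f g by (auto simp: chains_mem)
  have "lin D M T (f \<otimes>\<^bsub>bar_chains G M n\<^esub> g) = finprod D (\<lambda>x. T x ((f \<otimes>\<^bsub>bar_chains G M n\<^esub> g) x)) ?S"
    by (rule lin_ext[OF fg fS(1) sfg fS(2)])
  also have "\<dots> = finprod D (\<lambda>x. T x (f x) \<otimes>\<^bsub>D\<^esub> T x (g x)) ?S"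
    by (intro D.finprod_cong') (use fS fx Tm Tc in \<open>auto simp: chains_simps\<close>)
  also have "\<dots> = finprod D (\<lambda>x. T x (f x)) ?S \<otimes>\<^bsub>D\<^esub> finprod D (\<lambda>x. T x (g x)) ?S"
    by (rule D.finprod_multf) (use fS fx Tc in auto)
  also have "\<dots> = lin D M T f \<otimes>\<^bsub>D\<^esub> lin D M T g"
    using lin_ext[OF f fS(1) _ fS(2)] lin_ext[OF g fS(1) _ fS(2)] by simp
  finally show ?thesis .
qed

lemma lin_one: "lin D M T \<one>\<^bsub>bar_chains G M n\<^esub> = \<one>\<^bsub>D\<^esub>"
proof -
  interpret D: comm_monoid D by (rule D)
  have "supp M \<one>\<^bsub>bar_chains G M n\<^esub> = {}" by (simp add: chains_simps supp_def)
  then show ?thesis by (simp add: lin_def)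
qed

lemma lin_single:
  assumes "y \<in> bar_lists G n" "m \<in> carrier M"
  shows "lin D M T (single M y m) = T y m"
proof -
  interpret D: comm_monoid D by (rule D)
  interpret M: comm_group M by (rule M)
  have "lin D M T (single M y m) = finprod D (\<lambda>x. T x (single M y m x)) {y}"
    by (rule lin_ext) (use assms supp_single[of M y m] in \<open>auto intro: single_carrier M.monoid_axioms\<close>)
  also have "\<dots> = T y m" using assms Tc by (simp add: single_def)
  finally show ?thesis .
qed

lemma lin_finprod:
  assumes g: "g \<in> S \<rightarrow> carrier (bar_chains G M n)"
  shows "lin D M T (finprod (bar_chains G M n) g S) = finprod D (\<lambda>s. lin D M T (g s)) S"
proof -
  interpret C: comm_group "bar_chains G M n" by (rule chains_comm_group[OF M])
  show ?thesis
    by (rule hom_finprod_gen[where h="lin D M T", OF C.comm_monoid_axioms D lin_mult lin_one lin_closed g])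
qed

end


section \<open>Faces and boundary\<close>

lemma face_lists:
  assumes cl: "\<And>a b. a \<in> carrier G \<Longrightarrow> b \<in> carrier G \<Longrightarrow> a \<otimes>\<^bsub>G\<^esub> b \<in> carrier G"
    and x: "x \<in> bar_lists G (Suc n)" and i: "i \<le> Suc n"
  shows "bar_face G (Suc n) i x \<in> bar_lists G n"
proof -
  have lx: "length x = Suc n" and sx: "set x \<subseteq> carrier G" using x by (auto simp: bar_lists_def)
  consider "i = 0" | "i = Suc n" | "0 < i" "i \<le> n" using i by linarith
  then show ?thesis
  proof cases
    case 1
    have "set (tl x) \<subseteq> set x" by (cases x) auto
    then show ?thesis using 1 lx sx by (auto simp: bar_face_def bar_lists_def)
  next
    case 2 then show ?thesis using lx sx by (auto simp: bar_face_def bar_lists_def dest: in_set_butlastD)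
  next
    case 3
    have a: "x ! (i - 1) \<in> carrier G" "x ! i \<in> carrier G" using 3 lx sx by (auto intro!: subsetD[OF sx] nth_mem)
    have "set (take (i - 1) x) \<subseteq> carrier G" "set (drop (i + 1) x) \<subseteq> carrier G"
      using sx by (meson order_trans set_take_subset set_drop_subset)+
    then show ?thesis using 3 lx a cl[OF a] by (auto simp: bar_face_def bar_lists_def)
  qed
qed

lemma coef_triv: "bar_coef G M (\<lambda>g m. m) i x m = (if even i then m else inv\<^bsub>M\<^esub> m)"
  by (simp add: bar_coef_def)

definition Tbd :: "('g,'a) monoid_scheme \<Rightarrow> ('m,'b) monoid_scheme \<Rightarrow> ('g \<Rightarrow> 'm \<Rightarrow> 'm) \<Rightarrow> nat
      \<Rightarrow> 'g list \<Rightarrow> 'm \<Rightarrow> ('g list \<Rightarrow> 'm)" where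
  "Tbd G M \<phi> n x m = finprod (bar_chains G M n)
      (\<lambda>i. single M (bar_face G (Suc n) i x) (bar_coef G M \<phi> i x m)) {0..Suc n}"

lemma bd_lin: "bar_bd G M \<phi> (Suc n) f = lin (bar_chains G M n) M (Tbd G M \<phi> n) f"
  by (simp add: bar_bd_def lin_def Tbd_def)

lemma bd_linmap:
  assumes M: "comm_group M"
    and cl: "\<And>a b. a \<in> carrier G \<Longrightarrow> b \<in> carrier G \<Longrightarrow> a \<otimes>\<^bsub>G\<^esub> b \<in> carrier G"
  shows "linmap G M (Suc n) (bar_chains G M n) (Tbd G M (\<lambda>g m. m) n)"
proof -
  interpret M: comm_group M by (rule M)
  interpret C: comm_group "bar_chains G M n" by (rule chains_comm_group[OF M])
  have cc: "bar_coef G M (\<lambda>g m. m) i x m \<in> carrier M" if "m \<in> carrier M" for i x m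
    using that by (simp add: coef_triv)
  have sc: "(\<lambda>i. single M (bar_face G (Suc n) i x) (bar_coef G M (\<lambda>g m. m) i x m)) \<in> {0..Suc n} \<rightarrow> carrier (bar_chains G M n)"
    if "x \<in> bar_lists G (Suc n)" "m \<in> carrier M" for x m
    using that by (auto intro!: single_carrier face_lists[OF cl] cc M.monoid_axioms)
  show ?thesis
  proof (rule linmap.intro)
    show "comm_group M" by (rule M)
    show "comm_monoid (bar_chains G M n)" by (rule C.comm_monoid_axioms)
  next
    fix x m assume "x \<in> bar_lists G (Suc n)" "m \<in> carrier M"
    then show "Tbd G M (\<lambda>g m. m) n x m \<in> carrier (bar_chains G M n)"
      unfolding Tbd_def by (rule C.finprod_closed[OF sc])
  next
    fix x assume "x \<in> bar_lists G (Suc n)"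
    have "Tbd G M (\<lambda>g m. m) n x \<one>\<^bsub>M\<^esub> = finprod (bar_chains G M n) (\<lambda>i. \<one>\<^bsub>bar_chains G M n\<^esub>) {0..Suc n}"
      unfolding Tbd_def coef_triv by (intro C.finprod_cong') (auto simp: single_one)
    then show "Tbd G M (\<lambda>g m. m) n x \<one>\<^bsub>M\<^esub> = \<one>\<^bsub>bar_chains G M n\<^esub>" by simp
  next
    fix x a b assume x: "x \<in> bar_lists G (Suc n)" and a: "a \<in> carrier M" and b: "b \<in> carrier M"
    have "Tbd G M (\<lambda>g m. m) n x (a \<otimes>\<^bsub>M\<^esub> b) = finprod (bar_chains G M n)
        (\<lambda>i. single M (bar_face G (Suc n) i x) (bar_coef G M (\<lambda>g m. m) i x a) \<otimes>\<^bsub>bar_chains G M n\<^esub>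
             single M (bar_face G (Suc n) i x) (bar_coef G M (\<lambda>g m. m) i x b)) {0..Suc n}"
      unfolding Tbd_def
    proof (intro C.finprod_cong')
      fix i
      show "single M (bar_face G (Suc n) i x) (bar_coef G M (\<lambda>g m. m) i x (a \<otimes>\<^bsub>M\<^esub> b)) =
         single M (bar_face G (Suc n) i x) (bar_coef G M (\<lambda>g m. m) i x a) \<otimes>\<^bsub>bar_chains G M n\<^esub>
         single M (bar_face G (Suc n) i x) (bar_coef G M (\<lambda>g m. m) i x b)"
        using a b by (simp add: coef_triv single_mult[OF M.monoid_axioms] M.inv_mult)
    qed (use sc[OF x a] sc[OF x b] in auto)
    also have "\<dots> = Tbd G M (\<lambda>g m. m) n x a \<otimes>\<^bsub>bar_chains G M n\<^esub> Tbd G M (\<lambda>g m. m) n x b"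
      unfolding Tbd_def by (rule C.finprod_multf[OF sc[OF x a] sc[OF x b]])
    finally show "Tbd G M (\<lambda>g m. m) n x (a \<otimes>\<^bsub>M\<^esub> b) = Tbd G M (\<lambda>g m. m) n x a \<otimes>\<^bsub>bar_chains G M n\<^esub> Tbd G M (\<lambda>g m. m) n x b" .
  qed
qed


section \<open>Quotients\<close>

lemma set_mult_upd: "set_mult (K\<lparr>carrier := S\<rparr>) = set_mult K"
  by (intro ext) simp

lemma r_coset_upd: "r_coset (K\<lparr>carrier := S\<rparr>) = r_coset K"
  by (intro ext) simp

lemma quot_carrier:
  "carrier ((K\<lparr>carrier := Z\<rparr>) Mod Bd) = (\<lambda>c. Bd #>\<^bsub>K\<^esub> c) ` Z"
  by (auto simp: FactGroup_def RCOSETS_def)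

lemma quot_comm_group:
  assumes K: "comm_group K" and Z: "subgroup Z K" and Bd: "subgroup Bd K"
  shows "comm_group ((K\<lparr>carrier := Z\<rparr>) Mod Bd)"
proof -
  interpret K: comm_group K by (rule K)
  let ?ZB = "Z <#>\<^bsub>K\<^esub> Bd"
  have ZB: "subgroup ?ZB K" by (rule K.mult_subgroups[OF Z Bd])
  have g1: "group (K\<lparr>carrier := ?ZB\<rparr>)" by (rule K.subgroup_imp_group[OF ZB])
  have c1: "comm_group (K\<lparr>carrier := ?ZB\<rparr>)"
  proof (rule group.group_comm_groupI[OF g1])
    fix x y assume "x \<in> carrier (K\<lparr>carrier := ?ZB\<rparr>)" "y \<in> carrier (K\<lparr>carrier := ?ZB\<rparr>)"
    then have "x \<in> carrier K" "y \<in> carrier K" using subgroup.subset[OF ZB] by auto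
    then show "x \<otimes>\<^bsub>K\<lparr>carrier := ?ZB\<rparr>\<^esub> y = y \<otimes>\<^bsub>K\<lparr>carrier := ?ZB\<rparr>\<^esub> x" by (simp add: K.m_comm)
  qed
  have BZB: "Bd \<subseteq> ?ZB"
  proof
    fix b assume b: "b \<in> Bd"
    then have "b = \<one>\<^bsub>K\<^esub> \<otimes>\<^bsub>K\<^esub> b" using subgroup.subset[OF Bd] by auto
    then show "b \<in> ?ZB" using b subgroup.one_closed[OF Z] unfolding set_mult_def by blast
  qed
  have sB: "subgroup Bd (K\<lparr>carrier := ?ZB\<rparr>)" by (rule K.subgroup_incl[OF Bd ZB BZB])
  have cq: "comm_group ((K\<lparr>carrier := ?ZB\<rparr>) Mod Bd)" by (rule comm_group.abelian_FactGroup[OF c1 sB])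
  have "carrier ((K\<lparr>carrier := ?ZB\<rparr>) Mod Bd) = carrier ((K\<lparr>carrier := Z\<rparr>) Mod Bd)"
  proof -
    have "(\<lambda>c. Bd #>\<^bsub>K\<^esub> c) ` ?ZB = (\<lambda>c. Bd #>\<^bsub>K\<^esub> c) ` Z"
    proof
      show "(\<lambda>c. Bd #>\<^bsub>K\<^esub> c) ` ?ZB \<subseteq> (\<lambda>c. Bd #>\<^bsub>K\<^esub> c) ` Z"
      proof
        fix Xc assume "Xc \<in> (\<lambda>c. Bd #>\<^bsub>K\<^esub> c) ` ?ZB"
        then obtain z b where zb: "z \<in> Z" "b \<in> Bd" "Xc = Bd #>\<^bsub>K\<^esub> (z \<otimes>\<^bsub>K\<^esub> b)"
          unfolding set_mult_def by blast
        have zc: "z \<in> carrier K" "b \<in> carrier K" using zb subgroup.subset[OF Z] subgroup.subset[OF Bd] by auto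
        have "Bd #>\<^bsub>K\<^esub> (z \<otimes>\<^bsub>K\<^esub> b) = Bd #>\<^bsub>K\<^esub> (b \<otimes>\<^bsub>K\<^esub> z)" using zc by (simp add: K.m_comm)
        also have "\<dots> = (Bd #>\<^bsub>K\<^esub> b) #>\<^bsub>K\<^esub> z"
          using zc subgroup.subset[OF Bd] by (simp add: K.coset_mult_assoc)
        also have "\<dots> = Bd #>\<^bsub>K\<^esub> z" using subgroup.rcos_const[OF Bd K.is_group zb(2)] by simp
        finally show "Xc \<in> (\<lambda>c. Bd #>\<^bsub>K\<^esub> c) ` Z" using zb by blast
      qed
      show "(\<lambda>c. Bd #>\<^bsub>K\<^esub> c) ` Z \<subseteq> (\<lambda>c. Bd #>\<^bsub>K\<^esub> c) ` ?ZB"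
      proof
        fix Xc assume "Xc \<in> (\<lambda>c. Bd #>\<^bsub>K\<^esub> c) ` Z"
        then obtain z where z: "z \<in> Z" "Xc = Bd #>\<^bsub>K\<^esub> z" by blast
        then have "z = z \<otimes>\<^bsub>K\<^esub> \<one>\<^bsub>K\<^esub>" using subgroup.subset[OF Z] by auto
        then have "z \<in> ?ZB" using z subgroup.one_closed[OF Bd] unfolding set_mult_def by blast
        then show "Xc \<in> (\<lambda>c. Bd #>\<^bsub>K\<^esub> c) ` ?ZB" using z by blast
      qed
    qed
    then show ?thesis by (simp only: quot_carrier)
  qed
  then have "(K\<lparr>carrier := ?ZB\<rparr>) Mod Bd = (K\<lparr>carrier := Z\<rparr>) Mod Bd"
    by (simp add: FactGroup_def set_mult_upd)
  then show ?thesis using cq by simp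
qed


section \<open>Homology with trivial action\<close>

context
  fixes G :: "('g,'a) monoid_scheme" and M :: "('m,'b) monoid_scheme"
  assumes M: "comm_group M"
    and cl: "\<And>a b. a \<in> carrier G \<Longrightarrow> b \<in> carrier G \<Longrightarrow> a \<otimes>\<^bsub>G\<^esub> b \<in> carrier G"
begin

lemma bd_closed:
  "f \<in> carrier (bar_chains G M (Suc n)) \<Longrightarrow> bar_bd G M (\<lambda>g m. m) (Suc n) f \<in> carrier (bar_chains G M n)"
  unfolding bd_lin by (rule linmap.lin_closed[OF bd_linmap[OF M cl]])

lemma bd_mult:
  "f \<in> carrier (bar_chains G M (Suc n)) \<Longrightarrow> g \<in> carrier (bar_chains G M (Suc n)) \<Longrightarrow>
   bar_bd G M (\<lambda>g m. m) (Suc n) (f \<otimes>\<^bsub>bar_chains G M (Suc n)\<^esub> g) =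
   bar_bd G M (\<lambda>g m. m) (Suc n) f \<otimes>\<^bsub>bar_chains G M n\<^esub> bar_bd G M (\<lambda>g m. m) (Suc n) g"
  unfolding bd_lin by (rule linmap.lin_mult[OF bd_linmap[OF M cl]])

lemma bd_group_hom:
  "group_hom (bar_chains G M (Suc n)) (bar_chains G M n) (bar_bd G M (\<lambda>g m. m) (Suc n))"
proof -
  interpret C1: comm_group "bar_chains G M (Suc n)" by (rule chains_comm_group[OF M])
  interpret C0: comm_group "bar_chains G M n" by (rule chains_comm_group[OF M])
  show ?thesis
    by (intro group_hom.intro group_hom_axioms.intro C1.is_group C0.is_group homI bd_closed bd_mult)
qed

lemma cycles_subgroup: "subgroup (bar_cycles G M (\<lambda>g m. m) n) (bar_chains G M n)"
proof (cases n)
  case 0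
  interpret C: comm_group "bar_chains G M n" by (rule chains_comm_group[OF M])
  show ?thesis using 0 C.subgroup_self by (simp add: bar_cycles_def)
next
  case (Suc k)
  have "bar_cycles G M (\<lambda>g m. m) n = kernel (bar_chains G M (Suc k)) (bar_chains G M k) (bar_bd G M (\<lambda>g m. m) (Suc k))"
    using Suc by (simp add: bar_cycles_def kernel_def)
  then show ?thesis using group_hom.subgroup_kernel[OF bd_group_hom[of k]] Suc by simp
qed

lemma bnd_subgroup: "subgroup (bar_boundaries G M (\<lambda>g m. m) n) (bar_chains G M n)"
  unfolding bar_boundaries_def by (rule group_hom.img_is_subgroup[OF bd_group_hom])

lemma homology_comm_group: "comm_group (group_homology G M (\<lambda>g m. m) n)"
  unfolding group_homology_def
  by (rule quot_comm_group[OF chains_comm_group[OF M] cycles_subgroup bnd_subgroup])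

lemma homology_carrier: "carrier (group_homology G M (\<lambda>g m. m) n) =
  (\<lambda>c. bar_boundaries G M (\<lambda>g m. m) n #>\<^bsub>bar_chains G M n\<^esub> c) ` bar_cycles G M (\<lambda>g m. m) n"
  unfolding group_homology_def by (rule quot_carrier)

lemma homology_one: "\<one>\<^bsub>group_homology G M (\<lambda>g m. m) n\<^esub> = bar_boundaries G M (\<lambda>g m. m) n"
  unfolding group_homology_def by simp

end


section \<open>Inclusion maps\<close>

lemma bar_face_cong: "monoid.mult G1 = monoid.mult G2 \<Longrightarrow> bar_face G1 = bar_face G2"
  by (intro ext) (simp add: bar_face_def)

context
  fixes G1 G2 :: "('g,'a) monoid_scheme" and M :: "('m,'b) monoid_scheme"
  assumes M: "comm_group M"
    and cl1: "\<And>a b. a \<in> carrier G1 \<Longrightarrow> b \<in> carrier G1 \<Longrightarrow> a \<otimes>\<^bsub>G1\<^esub> b \<in> carrier G1"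
    and cl2: "\<And>a b. a \<in> carrier G2 \<Longrightarrow> b \<in> carrier G2 \<Longrightarrow> a \<otimes>\<^bsub>G2\<^esub> b \<in> carrier G2"
    and sub: "carrier G1 \<subseteq> carrier G2"
    and mm: "monoid.mult G1 = monoid.mult G2"
begin

lemma lists_mono: "bar_lists G1 n \<subseteq> bar_lists G2 n"
  using sub by (auto simp: bar_lists_def)

lemma chains_mono: "carrier (bar_chains G1 M n) \<subseteq> carrier (bar_chains G2 M n)"
  using lists_mono[of n] unfolding chains_simps by blast

lemma finprod_chains_sub:
  assumes "f \<in> S \<rightarrow> carrier (bar_chains G1 M n)"
  shows "finprod (bar_chains G1 M n) f S = finprod (bar_chains G2 M n) f S"
proof -
  interpret C1: comm_group "bar_chains G1 M n" by (rule chains_comm_group[OF M])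
  interpret C2: comm_group "bar_chains G2 M n" by (rule chains_comm_group[OF M])
  show ?thesis
    by (rule finprod_sub[OF C2.comm_monoid_axioms C1.comm_monoid_axioms chains_mono _ _ assms])
       (simp_all add: chains_simps)
qed

lemma Tbd_eq:
  assumes x: "x \<in> bar_lists G1 (Suc n)" and m: "m \<in> carrier M"
  shows "Tbd G1 M (\<lambda>g m. m) n x m = Tbd G2 M (\<lambda>g m. m) n x m"
proof -
  interpret M: comm_group M by (rule M)
  let ?h = "\<lambda>i. single M (bar_face G1 (Suc n) i x) (bar_coef G1 M (\<lambda>g m. m) i x m)"
  have h: "?h \<in> {0..Suc n} \<rightarrow> carrier (bar_chains G1 M n)"
    using x m by (auto intro!: single_carrier face_lists[OF cl1] M.monoid_axioms simp: coef_triv)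
  have "Tbd G1 M (\<lambda>g m. m) n x m = finprod (bar_chains G1 M n) ?h {0..Suc n}" by (simp add: Tbd_def)
  also have "\<dots> = finprod (bar_chains G2 M n) ?h {0..Suc n}" by (rule finprod_chains_sub[OF h])
  also have "\<dots> = Tbd G2 M (\<lambda>g m. m) n x m" by (simp add: Tbd_def bar_face_cong[OF mm] coef_triv)
  finally show ?thesis .
qed

lemma bd_eq:
  assumes f: "f \<in> carrier (bar_chains G1 M (Suc n))"
  shows "bar_bd G1 M (\<lambda>g m. m) (Suc n) f = bar_bd G2 M (\<lambda>g m. m) (Suc n) f"
proof -
  interpret C2: comm_group "bar_chains G2 M n" by (rule chains_comm_group[OF M])
  have fx: "\<And>x. f x \<in> carrier M" "supp M f \<subseteq> bar_lists G1 (Suc n)" using f by (auto simp: chains_mem)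
  have "(\<lambda>x. Tbd G1 M (\<lambda>g m. m) n x (f x)) \<in> supp M f \<rightarrow> carrier (bar_chains G1 M n)"
    using fx linmap.Tc[OF bd_linmap[OF M cl1]] by blast
  then have "bar_bd G1 M (\<lambda>g m. m) (Suc n) f = finprod (bar_chains G2 M n) (\<lambda>x. Tbd G1 M (\<lambda>g m. m) n x (f x)) (supp M f)"
    unfolding bd_lin lin_def by (rule finprod_chains_sub)
  also have "\<dots> = finprod (bar_chains G2 M n) (\<lambda>x. Tbd G2 M (\<lambda>g m. m) n x (f x)) (supp M f)"
  proof (rule C2.finprod_cong')
    show "(\<lambda>x. Tbd G2 M (\<lambda>g m. m) n x (f x)) \<in> supp M f \<rightarrow> carrier (bar_chains G2 M n)"
      using fx lists_mono linmap.Tc[OF bd_linmap[OF M cl2]] by blast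
  qed (use fx Tbd_eq in auto)
  also have "\<dots> = bar_bd G2 M (\<lambda>g m. m) (Suc n) f" unfolding bd_lin lin_def ..
  finally show ?thesis .
qed

lemma cycles_mono: "bar_cycles G1 M (\<lambda>g m. m) n \<subseteq> bar_cycles G2 M (\<lambda>g m. m) n"
proof (cases n)
  case 0 then show ?thesis using chains_mono by (simp add: bar_cycles_def)
next
  case (Suc k)
  show ?thesis
  proof
    fix f assume "f \<in> bar_cycles G1 M (\<lambda>g m. m) n"
    then have f: "f \<in> carrier (bar_chains G1 M (Suc k))" "bar_bd G1 M (\<lambda>g m. m) (Suc k) f = \<one>\<^bsub>bar_chains G1 M k\<^esub>"
      using Suc by (auto simp: bar_cycles_def)
    then show "f \<in> bar_cycles G2 M (\<lambda>g m. m) n" using Suc chains_mono bd_eq[OF f(1)]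
      by (auto simp: bar_cycles_def chains_simps)
  qed
qed

lemma bnd_mono: "bar_boundaries G1 M (\<lambda>g m. m) n \<subseteq> bar_boundaries G2 M (\<lambda>g m. m) n"
  unfolding bar_boundaries_def using bd_eq chains_mono by fastforce

lemma push_id:
  assumes k: "k \<in> carrier (bar_chains G1 M n)"
  shows "bar_push G1 M G2 M n id id k = k"
proof -
  interpret M: comm_group M by (rule M)
  have "(\<lambda>x. single M x (k x)) \<in> supp M k \<rightarrow> carrier (bar_chains G1 M n)"
  proof
    fix x assume "x \<in> supp M k"
    then show "single M x (k x) \<in> carrier (bar_chains G1 M n)"
      using k by (intro single_carrier) (auto simp: chains_mem M.monoid_axioms)
  qed
  then have "finprod (bar_chains G2 M n) (\<lambda>x. single M x (k x)) (supp M k) = finprod (bar_chains G1 M n) (\<lambda>x. single M x (k x)) (supp M k)"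
    by (rule finprod_chains_sub[symmetric])
  also have "\<dots> = k" by (rule chains_decomp[OF M k])
  finally show ?thesis by (simp add: bar_push_def)
qed

lemma hmap_incl:
  assumes c: "c \<in> bar_cycles G1 M (\<lambda>g m. m) n"
  shows "homology_map G2 M (\<lambda>g m. m) n (bar_push G1 M G2 M n id id)
           (bar_boundaries G1 M (\<lambda>g m. m) n #>\<^bsub>bar_chains G1 M n\<^esub> c)
         = bar_boundaries G2 M (\<lambda>g m. m) n #>\<^bsub>bar_chains G2 M n\<^esub> c"
proof -
  interpret C1: comm_group "bar_chains G1 M n" by (rule chains_comm_group[OF M])
  interpret C2: comm_group "bar_chains G2 M n" by (rule chains_comm_group[OF M])
  let ?B1 = "bar_boundaries G1 M (\<lambda>g m. m) n" and ?B2 = "bar_boundaries G2 M (\<lambda>g m. m) n"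
  have sB1: "subgroup ?B1 (bar_chains G1 M n)" by (rule bnd_subgroup[OF M cl1])
  have sB2: "subgroup ?B2 (bar_chains G2 M n)" by (rule bnd_subgroup[OF M cl2])
  have cc: "c \<in> carrier (bar_chains G1 M n)" using subgroup.subset[OF cycles_subgroup[OF M cl1]] c by blast
  have "c \<in> ?B1 #>\<^bsub>bar_chains G1 M n\<^esub> c"
    using subgroup.one_closed[OF sB1] cc unfolding r_coset_def by force
  then have "(SOME k. k \<in> ?B1 #>\<^bsub>bar_chains G1 M n\<^esub> c) \<in> ?B1 #>\<^bsub>bar_chains G1 M n\<^esub> c"
    using someI[of "\<lambda>k. k \<in> ?B1 #>\<^bsub>bar_chains G1 M n\<^esub> c"] by blast
  then obtain b where b: "b \<in> ?B1" "(SOME k. k \<in> ?B1 #>\<^bsub>bar_chains G1 M n\<^esub> c) = b \<otimes>\<^bsub>bar_chains G1 M n\<^esub> c"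
    unfolding r_coset_def by blast
  have bc: "b \<in> carrier (bar_chains G1 M n)" using b subgroup.subset[OF sB1] by blast
  have b2: "b \<in> ?B2" using b bnd_mono by blast
  have bc2: "b \<in> carrier (bar_chains G2 M n)" "c \<in> carrier (bar_chains G2 M n)" using bc cc chains_mono by blast+
  have "homology_map G2 M (\<lambda>g m. m) n (bar_push G1 M G2 M n id id) (?B1 #>\<^bsub>bar_chains G1 M n\<^esub> c)
        = ?B2 #>\<^bsub>bar_chains G2 M n\<^esub> (b \<otimes>\<^bsub>bar_chains G1 M n\<^esub> c)"
    unfolding homology_map_def b(2) using push_id bc cc by simp
  also have "\<dots> = ?B2 #>\<^bsub>bar_chains G2 M n\<^esub> (b \<otimes>\<^bsub>bar_chains G2 M n\<^esub> c)" by (simp add: chains_simps)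
  also have "\<dots> = (?B2 #>\<^bsub>bar_chains G2 M n\<^esub> b) #>\<^bsub>bar_chains G2 M n\<^esub> c"
    using bc2 subgroup.subset[OF sB2] by (simp add: C2.coset_mult_assoc)
  also have "\<dots> = ?B2 #>\<^bsub>bar_chains G2 M n\<^esub> c" using subgroup.rcos_const[OF sB2 C2.is_group b2] by simp
  finally show ?thesis .
qed

end


section \<open>Push-forward along an endomorphism\<close>

lemma push_lin: "bar_push G M G' M' n \<alpha> \<beta> f = lin (bar_chains G' M' n) M (\<lambda>x m. single M' (map \<alpha> x) (\<beta> m)) f"
  by (simp add: bar_push_def lin_def)

context
  fixes G :: "('g,'a) monoid_scheme" and M :: "('m,'b) monoid_scheme" and \<alpha> :: "'g \<Rightarrow> 'g"
  assumes M: "comm_group M"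
    and cl: "\<And>a b. a \<in> carrier G \<Longrightarrow> b \<in> carrier G \<Longrightarrow> a \<otimes>\<^bsub>G\<^esub> b \<in> carrier G"
    and ac: "\<And>a. a \<in> carrier G \<Longrightarrow> \<alpha> a \<in> carrier G"
    and am: "\<And>a b. a \<in> carrier G \<Longrightarrow> b \<in> carrier G \<Longrightarrow> \<alpha> (a \<otimes>\<^bsub>G\<^esub> b) = \<alpha> a \<otimes>\<^bsub>G\<^esub> \<alpha> b"
begin

lemma map_lists: "x \<in> bar_lists G n \<Longrightarrow> map \<alpha> x \<in> bar_lists G n"
  using ac by (auto simp: bar_lists_def)

lemma push_linmap: "linmap G M n (bar_chains G M n) (\<lambda>x m. single M (map \<alpha> x) (id m))"
proof -
  interpret M: comm_group M by (rule M)
  interpret C: comm_group "bar_chains G M n" by (rule chains_comm_group[OF M])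
  show ?thesis
  proof (rule linmap.intro)
    show "comm_group M" by (rule M)
    show "comm_monoid (bar_chains G M n)" by (rule C.comm_monoid_axioms)
  qed (auto intro: single_carrier map_lists M.monoid_axioms simp: single_one single_mult[OF M.monoid_axioms])
qed

lemma map_face:
  assumes x: "x \<in> bar_lists G (Suc n)" and i: "i \<le> Suc n"
  shows "bar_face G (Suc n) i (map \<alpha> x) = map \<alpha> (bar_face G (Suc n) i x)"
proof -
  have lx: "length x = Suc n" and sx: "set x \<subseteq> carrier G" using x by (auto simp: bar_lists_def)
  consider "i = 0" | "i = Suc n" | "0 < i" "i \<le> n" using i by linarith
  then show ?thesis
  proof cases
    case 1 then show ?thesis by (simp add: bar_face_def map_tl)
  next
    case 2 then show ?thesis by (simp add: bar_face_def map_butlast)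
  next
    case 3
    have a: "x ! (i - 1) \<in> carrier G" "x ! i \<in> carrier G" using 3 lx sx by (auto intro!: subsetD[OF sx] nth_mem)
    have "map \<alpha> x ! (i - 1) = \<alpha> (x ! (i - 1))" "map \<alpha> x ! i = \<alpha> (x ! i)" using 3 lx by auto
    then show ?thesis using 3 am[OF a] by (simp add: bar_face_def take_map drop_map)
  qed
qed

lemma push_chain_map:
  assumes f: "f \<in> carrier (bar_chains G M (Suc n))"
  shows "bar_push G M G M n \<alpha> id (bar_bd G M (\<lambda>g m. m) (Suc n) f)
       = bar_bd G M (\<lambda>g m. m) (Suc n) (bar_push G M G M (Suc n) \<alpha> id f)"
proof -
  interpret M: comm_group M by (rule M)
  interpret C0: comm_group "bar_chains G M n" by (rule chains_comm_group[OF M])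
  interpret C1: comm_group "bar_chains G M (Suc n)" by (rule chains_comm_group[OF M])
  interpret P0: linmap G M n "bar_chains G M n" "\<lambda>x m. single M (map \<alpha> x) (id m)" by (rule push_linmap)
  interpret P1: linmap G M "Suc n" "bar_chains G M (Suc n)" "\<lambda>x m. single M (map \<alpha> x) (id m)" by (rule push_linmap)
  interpret BD: linmap G M "Suc n" "bar_chains G M n" "Tbd G M (\<lambda>g m. m) n" by (rule bd_linmap[OF M cl])
  let ?c = "\<lambda>i m. if even i then m else inv\<^bsub>M\<^esub> m"
  have fx: "\<And>x. f x \<in> carrier M" "supp M f \<subseteq> bar_lists G (Suc n)" using f by (auto simp: chains_mem)
  have coef: "\<And>i x m. bar_coef G M (\<lambda>g m. m) i x m = ?c i m" by (simp add: coef_triv)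
  have cc: "\<And>i m. m \<in> carrier M \<Longrightarrow> ?c i m \<in> carrier M" by (simp add: coef_triv)
  have tb: "Tbd G M (\<lambda>g m. m) n x m = finprod (bar_chains G M n) (\<lambda>i. single M (bar_face G (Suc n) i x) (?c i m)) {0..Suc n}" for x m
    by (simp add: Tbd_def coef)
  have sc: "(\<lambda>i. single M (bar_face G (Suc n) i x) (?c i m)) \<in> {0..Suc n} \<rightarrow> carrier (bar_chains G M n)"
    if "x \<in> bar_lists G (Suc n)" "m \<in> carrier M" for x m
    using that by (auto intro!: single_carrier face_lists[OF cl] cc M.monoid_axioms)
  have scm: "single M (map \<alpha> (bar_face G (Suc n) i x)) (?c i m) \<in> carrier (bar_chains G M n)"
    if "x \<in> bar_lists G (Suc n)" "i \<le> Suc n" "m \<in> carrier M" for x i m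
    by (rule single_carrier[OF M.monoid_axioms map_lists[OF face_lists[OF cl that(1,2)]] cc[OF that(3)]])
  have scm': "(\<lambda>i. single M (map \<alpha> (bar_face G (Suc n) i x)) (?c i m)) \<in> {0..Suc n} \<rightarrow> carrier (bar_chains G M n)"
    if "x \<in> bar_lists G (Suc n)" "m \<in> carrier M" for x m
    using scm[OF that(1) _ that(2)] by auto
  have pf: "(\<lambda>x. finprod (bar_chains G M n) (\<lambda>i. single M (map \<alpha> (bar_face G (Suc n) i x)) (?c i (f x))) {0..Suc n})
            \<in> supp M f \<rightarrow> carrier (bar_chains G M n)"
    using fx C0.finprod_closed[OF scm'] by blast
  have lhs: "bar_push G M G M n \<alpha> id (bar_bd G M (\<lambda>g m. m) (Suc n) f)
     = finprod (bar_chains G M n) (\<lambda>x. finprod (bar_chains G M n)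
          (\<lambda>i. single M (map \<alpha> (bar_face G (Suc n) i x)) (?c i (f x))) {0..Suc n}) (supp M f)"
  proof -
    have "bar_push G M G M n \<alpha> id (bar_bd G M (\<lambda>g m. m) (Suc n) f)
       = lin (bar_chains G M n) M (\<lambda>x m. single M (map \<alpha> x) (id m))
           (finprod (bar_chains G M n) (\<lambda>x. Tbd G M (\<lambda>g m. m) n x (f x)) (supp M f))"
      by (simp add: push_lin bd_lin lin_def)
    also have "\<dots> = finprod (bar_chains G M n) (\<lambda>x. lin (bar_chains G M n) M (\<lambda>x m. single M (map \<alpha> x) (id m))
                       (Tbd G M (\<lambda>g m. m) n x (f x))) (supp M f)"
      by (rule P0.lin_finprod) (use fx BD.Tc in auto)
    also have "\<dots> = finprod (bar_chains G M n) (\<lambda>x. finprod (bar_chains G M n)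
          (\<lambda>i. single M (map \<alpha> (bar_face G (Suc n) i x)) (?c i (f x))) {0..Suc n}) (supp M f)"
    proof (rule C0.finprod_cong')
      fix x assume x: "x \<in> supp M f"
      then have xl: "x \<in> bar_lists G (Suc n)" using fx by blast
      have "lin (bar_chains G M n) M (\<lambda>x m. single M (map \<alpha> x) (id m)) (Tbd G M (\<lambda>g m. m) n x (f x))
          = finprod (bar_chains G M n) (\<lambda>i. lin (bar_chains G M n) M (\<lambda>x m. single M (map \<alpha> x) (id m))
               (single M (bar_face G (Suc n) i x) (?c i (f x)))) {0..Suc n}"
        unfolding tb by (rule P0.lin_finprod[OF sc[OF xl fx(1)]])
      also have "\<dots> = finprod (bar_chains G M n) (\<lambda>i. single M (map \<alpha> (bar_face G (Suc n) i x)) (?c i (f x))) {0..Suc n}"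
      proof (rule C0.finprod_cong')
        fix i assume i: "i \<in> {0..Suc n}"
        have "lin (bar_chains G M n) M (\<lambda>x m. single M (map \<alpha> x) (id m)) (single M (bar_face G (Suc n) i x) (?c i (f x)))
             = single M (map \<alpha> (bar_face G (Suc n) i x)) (id (?c i (f x)))"
          using i by (intro P0.lin_single face_lists[OF cl xl] cc fx(1)) auto
        then show "lin (bar_chains G M n) M (\<lambda>x m. single M (map \<alpha> x) (id m)) (single M (bar_face G (Suc n) i x) (?c i (f x)))
             = single M (map \<alpha> (bar_face G (Suc n) i x)) (?c i (f x))" by simp
      qed (use scm' xl fx(1) in auto)
      finally show "lin (bar_chains G M n) M (\<lambda>x m. single M (map \<alpha> x) (id m)) (Tbd G M (\<lambda>g m. m) n x (f x)) =
          finprod (bar_chains G M n) (\<lambda>i. single M (map \<alpha> (bar_face G (Suc n) i x)) (?c i (f x))) {0..Suc n}" .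
    next
      show "(\<lambda>x. finprod (bar_chains G M n) (\<lambda>i. single M (map \<alpha> (bar_face G (Suc n) i x)) (?c i (f x))) {0..Suc n})
            \<in> supp M f \<rightarrow> carrier (bar_chains G M n)"
        by (rule pf)
    qed simp
    finally show ?thesis .
  qed
  have rhs: "bar_bd G M (\<lambda>g m. m) (Suc n) (bar_push G M G M (Suc n) \<alpha> id f)
     = finprod (bar_chains G M n) (\<lambda>x. finprod (bar_chains G M n)
          (\<lambda>i. single M (map \<alpha> (bar_face G (Suc n) i x)) (?c i (f x))) {0..Suc n}) (supp M f)"
  proof -
    have "bar_bd G M (\<lambda>g m. m) (Suc n) (bar_push G M G M (Suc n) \<alpha> id f)
       = lin (bar_chains G M n) M (Tbd G M (\<lambda>g m. m) n)
           (finprod (bar_chains G M (Suc n)) (\<lambda>x. single M (map \<alpha> x) (id (f x))) (supp M f))"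
      by (simp add: push_lin bd_lin lin_def)
    also have "\<dots> = finprod (bar_chains G M n) (\<lambda>x. lin (bar_chains G M n) M (Tbd G M (\<lambda>g m. m) n)
                       (single M (map \<alpha> x) (id (f x)))) (supp M f)"
      by (rule BD.lin_finprod) (use fx in \<open>auto intro: single_carrier[OF M.monoid_axioms map_lists]\<close>)
    also have "\<dots> = finprod (bar_chains G M n) (\<lambda>x. finprod (bar_chains G M n)
          (\<lambda>i. single M (map \<alpha> (bar_face G (Suc n) i x)) (?c i (f x))) {0..Suc n}) (supp M f)"
    proof (rule C0.finprod_cong')
      fix x assume x: "x \<in> supp M f"
      then have xl: "x \<in> bar_lists G (Suc n)" using fx by blast
      have "lin (bar_chains G M n) M (Tbd G M (\<lambda>g m. m) n) (single M (map \<alpha> x) (id (f x)))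
          = Tbd G M (\<lambda>g m. m) n (map \<alpha> x) (f x)"
        using BD.lin_single[OF map_lists[OF xl] fx(1)] by simp
      also have "\<dots> = finprod (bar_chains G M n) (\<lambda>i. single M (map \<alpha> (bar_face G (Suc n) i x)) (?c i (f x))) {0..Suc n}"
        unfolding tb by (rule C0.finprod_cong') (use xl map_face scm' fx(1) in auto)
      finally show "lin (bar_chains G M n) M (Tbd G M (\<lambda>g m. m) n) (single M (map \<alpha> x) (id (f x))) =
          finprod (bar_chains G M n) (\<lambda>i. single M (map \<alpha> (bar_face G (Suc n) i x)) (?c i (f x))) {0..Suc n}" .
    next
      show "(\<lambda>x. finprod (bar_chains G M n) (\<lambda>i. single M (map \<alpha> (bar_face G (Suc n) i x)) (?c i (f x))) {0..Suc n})
            \<in> supp M f \<rightarrow> carrier (bar_chains G M n)"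
        by (rule pf)
    qed simp
    finally show ?thesis .
  qed
  show ?thesis using lhs rhs by simp
qed


lemma push_closed: "f \<in> carrier (bar_chains G M n) \<Longrightarrow> bar_push G M G M n \<alpha> id f \<in> carrier (bar_chains G M n)"
  unfolding push_lin by (rule linmap.lin_closed[OF push_linmap])

lemma push_mult: "f \<in> carrier (bar_chains G M n) \<Longrightarrow> g \<in> carrier (bar_chains G M n) \<Longrightarrow>
   bar_push G M G M n \<alpha> id (f \<otimes>\<^bsub>bar_chains G M n\<^esub> g) = bar_push G M G M n \<alpha> id f \<otimes>\<^bsub>bar_chains G M n\<^esub> bar_push G M G M n \<alpha> id g"
  unfolding push_lin by (rule linmap.lin_mult[OF push_linmap])

lemma push_bnd: "b \<in> bar_boundaries G M (\<lambda>g m. m) n \<Longrightarrow> bar_push G M G M n \<alpha> id b \<in> bar_boundaries G M (\<lambda>g m. m) n"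
  unfolding bar_boundaries_def using push_chain_map push_closed by fastforce

lemma push_cyc: "c \<in> bar_cycles G M (\<lambda>g m. m) n \<Longrightarrow> bar_push G M G M n \<alpha> id c \<in> bar_cycles G M (\<lambda>g m. m) n"
proof (cases n)
  case 0
  assume "c \<in> bar_cycles G M (\<lambda>g m. m) n"
  then show ?thesis using 0 push_closed by (simp add: bar_cycles_def)
next
  case (Suc k)
  assume c: "c \<in> bar_cycles G M (\<lambda>g m. m) n"
  then have cc: "c \<in> carrier (bar_chains G M (Suc k))" "bar_bd G M (\<lambda>g m. m) (Suc k) c = \<one>\<^bsub>bar_chains G M k\<^esub>"
    using Suc by (auto simp: bar_cycles_def)
  have "bar_bd G M (\<lambda>g m. m) (Suc k) (bar_push G M G M (Suc k) \<alpha> id c) = bar_push G M G M k \<alpha> id \<one>\<^bsub>bar_chains G M k\<^esub>"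
    using push_chain_map[OF cc(1)] cc(2) by simp
  also have "\<dots> = \<one>\<^bsub>bar_chains G M k\<^esub>" unfolding push_lin by (rule linmap.lin_one[OF push_linmap])
  finally show ?thesis using Suc push_closed[OF cc(1)] by (simp add: bar_cycles_def)
qed

lemma hmap_closed:
  assumes Xc: "Xc \<in> carrier (group_homology G M (\<lambda>g m. m) n)"
  shows "homology_map G M (\<lambda>g m. m) n (bar_push G M G M n \<alpha> id) Xc \<in> carrier (group_homology G M (\<lambda>g m. m) n)"
proof -
  interpret C: comm_group "bar_chains G M n" by (rule chains_comm_group[OF M])
  let ?B = "bar_boundaries G M (\<lambda>g m. m) n" and ?Z = "bar_cycles G M (\<lambda>g m. m) n"
  let ?P = "bar_push G M G M n \<alpha> id"
  have sB: "subgroup ?B (bar_chains G M n)" by (rule bnd_subgroup[OF M cl])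
  have sZ: "subgroup ?Z (bar_chains G M n)" by (rule cycles_subgroup[OF M cl])
  have "Xc \<in> (\<lambda>c. ?B #>\<^bsub>bar_chains G M n\<^esub> c) ` ?Z" using Xc homology_carrier[OF M cl, of n] by simp
  then obtain c where c: "c \<in> ?Z" "Xc = ?B #>\<^bsub>bar_chains G M n\<^esub> c" by (rule imageE) simp
  have cc: "c \<in> carrier (bar_chains G M n)" using c subgroup.subset[OF sZ] by blast
  have "c \<in> Xc" using subgroup.one_closed[OF sB] cc c(2) unfolding r_coset_def by force
  then have "(SOME k. k \<in> Xc) \<in> Xc" using someI[of "\<lambda>k. k \<in> Xc"] by blast
  then obtain b where b: "b \<in> ?B" "(SOME k. k \<in> Xc) = b \<otimes>\<^bsub>bar_chains G M n\<^esub> c"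
    unfolding c(2) r_coset_def by blast
  have bc: "b \<in> carrier (bar_chains G M n)" using b subgroup.subset[OF sB] by blast
  have "homology_map G M (\<lambda>g m. m) n ?P Xc = ?B #>\<^bsub>bar_chains G M n\<^esub> (?P b \<otimes>\<^bsub>bar_chains G M n\<^esub> ?P c)"
    unfolding homology_map_def b(2) using push_mult[OF bc cc] by simp
  also have "\<dots> = (?B #>\<^bsub>bar_chains G M n\<^esub> ?P b) #>\<^bsub>bar_chains G M n\<^esub> ?P c"
    using push_closed bc cc subgroup.subset[OF sB] by (simp add: C.coset_mult_assoc)
  also have "\<dots> = ?B #>\<^bsub>bar_chains G M n\<^esub> ?P c" using subgroup.rcos_const[OF sB C.is_group push_bnd[OF b(1)]] by simp
  finally show ?thesis using homology_carrier[OF M cl, of n] push_cyc[OF c(1)] by simp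
qed

end


lemma bd_out_closed:
  assumes M: "comm_group M" and Q: "group Q"
    and \<phi>c: "\<And>c m. c \<in> carrier Q \<Longrightarrow> m \<in> carrier M \<Longrightarrow> \<phi> c m \<in> carrier M"
    and f: "f \<in> carrier (bar_chains Q M (Suc n))"
  shows "bar_bd Q M \<phi> (Suc n) f \<in> carrier (bar_chains Q M n)"
proof -
  interpret M: comm_group M by (rule M)
  interpret Q: group Q by (rule Q)
  interpret C: comm_group "bar_chains Q M n" by (rule chains_comm_group[OF M])
  have cc: "bar_coef Q M \<phi> i x m \<in> carrier M" if "x \<in> bar_lists Q (Suc n)" "m \<in> carrier M" for i x m
  proof -
    have "hd x \<in> set x" using that(1) by (cases x) (auto simp: bar_lists_def)
    then have "hd x \<in> carrier Q" using that(1) by (auto simp: bar_lists_def)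
    then show ?thesis using that \<phi>c by (simp add: bar_coef_def)
  qed
  have Tc: "Tbd Q M \<phi> n x m \<in> carrier (bar_chains Q M n)" if "x \<in> bar_lists Q (Suc n)" "m \<in> carrier M" for x m
    unfolding Tbd_def
    by (rule C.finprod_closed) (use that cc in \<open>auto intro!: single_carrier[OF M.monoid_axioms] face_lists\<close>)
  have "(\<lambda>x. Tbd Q M \<phi> n x (f x)) \<in> supp M f \<rightarrow> carrier (bar_chains Q M n)"
    using f Tc by (auto simp: chains_mem)
  then show ?thesis unfolding bd_lin lin_def by (rule C.finprod_closed)
qed

lemma bnd_out_sub:
  assumes M: "comm_group M" and Q: "group Q"
    and \<phi>c: "\<And>c m. c \<in> carrier Q \<Longrightarrow> m \<in> carrier M \<Longrightarrow> \<phi> c m \<in> carrier M"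
  shows "bar_boundaries Q M \<phi> n \<subseteq> carrier (bar_chains Q M n)"
  unfolding bar_boundaries_def using bd_out_closed[where \<phi>=\<phi>, OF M Q \<phi>c] by blast

lemma bnd_one:
  assumes M: "comm_group M"
  shows "\<one>\<^bsub>bar_chains Q M n\<^esub> \<in> bar_boundaries Q M \<phi> n"
proof -
  interpret C: comm_group "bar_chains Q M n" by (rule chains_comm_group[OF M])
  interpret C1: comm_group "bar_chains Q M (Suc n)" by (rule chains_comm_group[OF M])
  have "supp M \<one>\<^bsub>bar_chains Q M (Suc n)\<^esub> = {}" by (simp add: chains_simps supp_def)
  then have "bar_bd Q M \<phi> (Suc n) \<one>\<^bsub>bar_chains Q M (Suc n)\<^esub> = \<one>\<^bsub>bar_chains Q M n\<^esub>"
    by (simp add: bar_bd_def)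
  then show ?thesis unfolding bar_boundaries_def using C1.one_closed by force
qed

lemma out_zero:
  assumes M1: "comm_group M1" and M2: "comm_group M2" and Q1: "group Q1" and Q2: "group Q2"
    and \<phi>1: "\<And>c m. c \<in> carrier Q1 \<Longrightarrow> m \<in> carrier M1 \<Longrightarrow> \<phi>1 c m \<in> carrier M1"
    and \<phi>2: "\<And>c m. c \<in> carrier Q2 \<Longrightarrow> m \<in> carrier M2 \<Longrightarrow> \<phi>2 c m \<in> carrier M2"
    and \<beta>: "\<And>m. m \<in> carrier M1 \<Longrightarrow> \<beta> m = \<one>\<^bsub>M2\<^esub>"
    and Xc: "Xc \<in> carrier (group_homology Q1 M1 \<phi>1 n)"
  shows "homology_map Q2 M2 \<phi>2 n (bar_push Q1 M1 Q2 M2 n \<gamma> \<beta>) Xc = \<one>\<^bsub>group_homology Q2 M2 \<phi>2 n\<^esub>"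
proof -
  interpret C1: comm_group "bar_chains Q1 M1 n" by (rule chains_comm_group[OF M1])
  interpret C2: comm_group "bar_chains Q2 M2 n" by (rule chains_comm_group[OF M2])
  let ?B1 = "bar_boundaries Q1 M1 \<phi>1 n" and ?Z1 = "bar_cycles Q1 M1 \<phi>1 n"
  let ?B2 = "bar_boundaries Q2 M2 \<phi>2 n"
  have Z1: "?Z1 \<subseteq> carrier (bar_chains Q1 M1 n)" by (auto simp: bar_cycles_def)
  have B1: "?B1 \<subseteq> carrier (bar_chains Q1 M1 n)" by (rule bnd_out_sub[where \<phi>=\<phi>1, OF M1 Q1 \<phi>1])
  have B2: "?B2 \<subseteq> carrier (bar_chains Q2 M2 n)" by (rule bnd_out_sub[where \<phi>=\<phi>2, OF M2 Q2 \<phi>2])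
  have "Xc \<in> (\<lambda>c. ?B1 #>\<^bsub>bar_chains Q1 M1 n\<^esub> c) ` ?Z1"
    using Xc unfolding group_homology_def quot_carrier .
  then obtain a where a: "a \<in> ?Z1" "Xc = ?B1 #>\<^bsub>bar_chains Q1 M1 n\<^esub> a" by (rule imageE) simp
  have ac: "a \<in> carrier (bar_chains Q1 M1 n)" using a Z1 by blast
  have "a \<in> Xc" using bnd_one[OF M1] ac a(2) unfolding r_coset_def by force
  then have "(SOME k. k \<in> Xc) \<in> Xc" using someI[of "\<lambda>k. k \<in> Xc"] by blast
  then obtain b where b: "b \<in> ?B1" "(SOME k. k \<in> Xc) = b \<otimes>\<^bsub>bar_chains Q1 M1 n\<^esub> a"
    unfolding a(2) r_coset_def by blast
  have kc: "b \<otimes>\<^bsub>bar_chains Q1 M1 n\<^esub> a \<in> carrier (bar_chains Q1 M1 n)" using b B1 ac by blast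
  then have kx: "\<And>z. (b \<otimes>\<^bsub>bar_chains Q1 M1 n\<^esub> a) z \<in> carrier M1" by (simp add: chains_mem)
  have "bar_push Q1 M1 Q2 M2 n \<gamma> \<beta> (b \<otimes>\<^bsub>bar_chains Q1 M1 n\<^esub> a) = \<one>\<^bsub>bar_chains Q2 M2 n\<^esub>"
    unfolding bar_push_def by (rule C2.finprod_one_eqI) (simp add: \<beta>[OF kx] single_one)
  then have "homology_map Q2 M2 \<phi>2 n (bar_push Q1 M1 Q2 M2 n \<gamma> \<beta>) Xc = ?B2 #>\<^bsub>bar_chains Q2 M2 n\<^esub> \<one>\<^bsub>bar_chains Q2 M2 n\<^esub>"
    unfolding homology_map_def b(2) by simp
  also have "\<dots> = ?B2" using B2 by (rule C2.coset_mult_one)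
  finally show ?thesis by (simp add: group_homology_def)
qed


lemma Fp_comm_group: "comm_group (Fp p)"
  by (rule abelian_group.a_comm_group[OF ring.is_abelian_group[OF cring.axioms(1)[OF ZFact_is_cring]]])

context
  fixes B :: "('g,'a) monoid_scheme" and A :: "'g set" and p j :: nat
  assumes B: "group B" and A: "subgroup A B"
begin

lemma GI_cl:
  assumes "subgroup U B" "a \<in> carrier (B\<lparr>carrier := U \<inter> A\<rparr>)" "b \<in> carrier (B\<lparr>carrier := U \<inter> A\<rparr>)"
  shows "a \<otimes>\<^bsub>B\<lparr>carrier := U \<inter> A\<rparr>\<^esub> b \<in> carrier (B\<lparr>carrier := U \<inter> A\<rparr>)"
  using assms A by (simp add: subgroup.m_closed)

lemma Hin_comm: "subgroup U B \<Longrightarrow> comm_group (H_in B A p j U)"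
  unfolding H_in_def by (rule homology_comm_group[OF Fp_comm_group GI_cl])

lemma Hin_carrier: "subgroup U B \<Longrightarrow> carrier (H_in B A p j U) =
  (\<lambda>c. bar_boundaries (B\<lparr>carrier := U \<inter> A\<rparr>) (Fp p) (\<lambda>g m. m) j #>\<^bsub>bar_chains (B\<lparr>carrier := U \<inter> A\<rparr>) (Fp p) j\<^esub> c)
     ` bar_cycles (B\<lparr>carrier := U \<inter> A\<rparr>) (Fp p) (\<lambda>g m. m) j"
  unfolding H_in_def by (rule homology_carrier[OF Fp_comm_group GI_cl])

lemma Hin_map_coset:
  assumes W: "subgroup W B" and U: "subgroup U B" and WU: "W \<subseteq> U"
    and c: "c \<in> bar_cycles (B\<lparr>carrier := W \<inter> A\<rparr>) (Fp p) (\<lambda>g m. m) j"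
  shows "H_in_map B A p j W U (bar_boundaries (B\<lparr>carrier := W \<inter> A\<rparr>) (Fp p) (\<lambda>g m. m) j #>\<^bsub>bar_chains (B\<lparr>carrier := W \<inter> A\<rparr>) (Fp p) j\<^esub> c)
       = bar_boundaries (B\<lparr>carrier := U \<inter> A\<rparr>) (Fp p) (\<lambda>g m. m) j #>\<^bsub>bar_chains (B\<lparr>carrier := U \<inter> A\<rparr>) (Fp p) j\<^esub> c"
    and "c \<in> bar_cycles (B\<lparr>carrier := U \<inter> A\<rparr>) (Fp p) (\<lambda>g m. m) j"
proof -
  have sub: "carrier (B\<lparr>carrier := W \<inter> A\<rparr>) \<subseteq> carrier (B\<lparr>carrier := U \<inter> A\<rparr>)" using WU by auto
  have mm: "monoid.mult (B\<lparr>carrier := W \<inter> A\<rparr>) = monoid.mult (B\<lparr>carrier := U \<inter> A\<rparr>)" by simp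
  show "H_in_map B A p j W U (bar_boundaries (B\<lparr>carrier := W \<inter> A\<rparr>) (Fp p) (\<lambda>g m. m) j #>\<^bsub>bar_chains (B\<lparr>carrier := W \<inter> A\<rparr>) (Fp p) j\<^esub> c)
       = bar_boundaries (B\<lparr>carrier := U \<inter> A\<rparr>) (Fp p) (\<lambda>g m. m) j #>\<^bsub>bar_chains (B\<lparr>carrier := U \<inter> A\<rparr>) (Fp p) j\<^esub> c"
    unfolding H_in_map_def by (rule hmap_incl[OF Fp_comm_group GI_cl[OF W] GI_cl[OF U] sub mm c])
  show "c \<in> bar_cycles (B\<lparr>carrier := U \<inter> A\<rparr>) (Fp p) (\<lambda>g m. m) j"
    using cycles_mono[OF Fp_comm_group GI_cl[OF W] GI_cl[OF U] sub mm] c by blast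
qed

lemma Hin_map_closed:
  assumes W: "subgroup W B" and U: "subgroup U B" and WU: "W \<subseteq> U"
    and y: "y \<in> carrier (H_in B A p j W)"
  shows "H_in_map B A p j W U y \<in> carrier (H_in B A p j U)"
proof -
  obtain c where c: "c \<in> bar_cycles (B\<lparr>carrier := W \<inter> A\<rparr>) (Fp p) (\<lambda>g m. m) j"
    "y = bar_boundaries (B\<lparr>carrier := W \<inter> A\<rparr>) (Fp p) (\<lambda>g m. m) j #>\<^bsub>bar_chains (B\<lparr>carrier := W \<inter> A\<rparr>) (Fp p) j\<^esub> c"
    using y unfolding Hin_carrier[OF W] by (rule imageE) simp
  show ?thesis unfolding c(2) Hin_map_coset(1)[OF W U WU c(1)] Hin_carrier[OF U]
    using Hin_map_coset(2)[OF W U WU c(1)] by (rule imageI)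
qed

lemma Hin_map_comp:
  assumes U1: "subgroup U1 B" and U2: "subgroup U2 B" and U3: "subgroup U3 B" and "U1 \<subseteq> U2" "U2 \<subseteq> U3"
    and y: "y \<in> carrier (H_in B A p j U1)"
  shows "H_in_map B A p j U2 U3 (H_in_map B A p j U1 U2 y) = H_in_map B A p j U1 U3 y"
proof -
  obtain c where c: "c \<in> bar_cycles (B\<lparr>carrier := U1 \<inter> A\<rparr>) (Fp p) (\<lambda>g m. m) j"
    "y = bar_boundaries (B\<lparr>carrier := U1 \<inter> A\<rparr>) (Fp p) (\<lambda>g m. m) j #>\<^bsub>bar_chains (B\<lparr>carrier := U1 \<inter> A\<rparr>) (Fp p) j\<^esub> c"
    using y unfolding Hin_carrier[OF U1] by (rule imageE) simp
  have "U1 \<subseteq> U3" using assms by blast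
  show ?thesis unfolding c(2) Hin_map_coset(1)[OF U1 U2 \<open>U1 \<subseteq> U2\<close> c(1)] Hin_map_coset(1)[OF U1 U3 \<open>U1 \<subseteq> U3\<close> c(1)]
    using Hin_map_coset(1)[OF U2 U3 \<open>U2 \<subseteq> U3\<close> Hin_map_coset(2)[OF U1 U2 \<open>U1 \<subseteq> U2\<close> c(1)]] .
qed


lemma Quo_group:
  assumes U: "subgroup U B" and N: "A \<lhd> B"
  shows "group (Quo B A U)"
proof -
  interpret B: group B by (rule B)
  have sUA: "subgroup (U \<inter> A) B" by (rule B.subgroups_Inter_pair[OF U A])
  have gU: "group (B\<lparr>carrier := U\<rparr>)" by (rule B.subgroup_imp_group[OF U])
  have sub: "subgroup (U \<inter> A) (B\<lparr>carrier := U\<rparr>)" by (rule B.subgroup_incl[OF sUA U]) blast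
  have "(U \<inter> A) \<lhd> (B\<lparr>carrier := U\<rparr>)"
    unfolding group.normal_inv_iff[OF gU]
  proof (intro conjI ballI sub)
    fix x h assume x: "x \<in> carrier (B\<lparr>carrier := U\<rparr>)" and h: "h \<in> U \<inter> A"
    have xc: "x \<in> carrier B" "h \<in> carrier B" using x h subgroup.subset[OF U] by auto
    have "x \<otimes>\<^bsub>B\<^esub> h \<otimes>\<^bsub>B\<^esub> inv\<^bsub>B\<^esub> x \<in> A" using normal.inv_op_closed2[OF N xc(1)] h by blast
    moreover have "x \<otimes>\<^bsub>B\<^esub> h \<otimes>\<^bsub>B\<^esub> inv\<^bsub>B\<^esub> x \<in> U" using x h U by (simp add: subgroup.m_closed subgroup.m_inv_closed)
    ultimately show "x \<otimes>\<^bsub>B\<lparr>carrier := U\<rparr>\<^esub> h \<otimes>\<^bsub>B\<lparr>carrier := U\<rparr>\<^esub> inv\<^bsub>B\<lparr>carrier := U\<rparr>\<^esub> x \<in> U \<inter> A"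
      using x B.m_inv_consistent[OF U] by simp
  qed
  then show ?thesis unfolding Quo_def by (rule normal.factorgroup_is_group)
qed

lemma conj_closed:
  assumes U: "subgroup U B" and N: "A \<lhd> B"
    and c: "c \<in> carrier (Quo B A U)" and m: "m \<in> carrier (H_in B A p j U)"
  shows "conj_act B A p j U c m \<in> carrier (H_in B A p j U)"
proof -
  interpret B: group B by (rule B)
  obtain a where a: "a \<in> U" "c = (U \<inter> A) #>\<^bsub>B\<^esub> a"
    using c unfolding Quo_def quot_carrier by (rule imageE) simp
  have ac: "a \<in> carrier B" using a subgroup.subset[OF U] by blast
  have "\<one>\<^bsub>B\<^esub> \<in> U \<inter> A" using A U by (simp add: subgroup.one_closed)
  then have "a \<in> c" using a ac unfolding r_coset_def by (auto intro!: bexI[of _ "\<one>\<^bsub>B\<^esub>"])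
  then have "(SOME u. u \<in> c) \<in> c" using someI[of "\<lambda>u. u \<in> c"] by blast
  then obtain h where h: "h \<in> U \<inter> A" "(SOME u. u \<in> c) = h \<otimes>\<^bsub>B\<^esub> a" unfolding a(2) r_coset_def by blast
  define u where "u = (SOME u. u \<in> c)"
  have uU: "u \<in> U" using h a U unfolding u_def by (simp add: subgroup.m_closed)
  have uc: "u \<in> carrier B" using uU subgroup.subset[OF U] by blast
  let ?G = "B\<lparr>carrier := U \<inter> A\<rparr>"
  let ?\<alpha> = "\<lambda>g. u \<otimes>\<^bsub>B\<^esub> g \<otimes>\<^bsub>B\<^esub> inv\<^bsub>B\<^esub> u"
  have ac': "?\<alpha> g \<in> carrier ?G" if "g \<in> carrier ?G" for g
  proof -
    have gc: "g \<in> carrier B" "g \<in> A" "g \<in> U" using that subgroup.subset[OF A] by auto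
    have "?\<alpha> g \<in> A" using normal.inv_op_closed2[OF N uc gc(2)] .
    moreover have "?\<alpha> g \<in> U" using uU gc U by (simp add: subgroup.m_closed subgroup.m_inv_closed)
    ultimately show ?thesis by simp
  qed
  have am: "?\<alpha> (g1 \<otimes>\<^bsub>?G\<^esub> g2) = ?\<alpha> g1 \<otimes>\<^bsub>?G\<^esub> ?\<alpha> g2" if "g1 \<in> carrier ?G" "g2 \<in> carrier ?G" for g1 g2
  proof -
    have gc: "g1 \<in> carrier B" "g2 \<in> carrier B" using that subgroup.subset[OF A] by auto
    have hl: "\<And>y. y \<in> carrier B \<Longrightarrow> inv\<^bsub>B\<^esub> u \<otimes>\<^bsub>B\<^esub> (u \<otimes>\<^bsub>B\<^esub> y) = y"
      using uc by (simp add: B.m_assoc[symmetric])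
    have "?\<alpha> g1 \<otimes>\<^bsub>B\<^esub> ?\<alpha> g2 = ?\<alpha> (g1 \<otimes>\<^bsub>B\<^esub> g2)"
      using gc uc by (simp add: B.m_assoc hl)
    then show ?thesis by simp
  qed
  have "homology_map ?G (Fp p) (\<lambda>g m. m) j (bar_push ?G (Fp p) ?G (Fp p) j ?\<alpha> id) m \<in> carrier (group_homology ?G (Fp p) (\<lambda>g m. m) j)"
    by (rule hmap_closed[OF Fp_comm_group GI_cl[OF U] ac' am]) (use m in \<open>simp_all add: H_in_def\<close>)
  then show ?thesis unfolding conj_act_def H_in_def u_def Let_def by simp
qed

end


theorem proposition3p3:
  fixes B :: "('g, 'a) monoid_scheme" and C :: "('c, 'b) monoid_scheme"
    and A :: "'g set" and q :: "'g \<Rightarrow> 'c"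
    and p i j :: nat and T :: "'g set set"
  assumes "group B" and "group C"
    and "subgroup A B"
    and "q \<in> hom B C" and "q ` carrier B = carrier C" and "kernel B C q = A"
    and "Factorial_Ring.prime p"
    and "\<forall>U\<in>T. subgroup U B"
    and "\<forall>U1\<in>T. \<forall>U2\<in>T. \<exists>U\<in>T. U \<subseteq> U1 \<inter> U2"
    and "\<forall>U\<in>T. finite (carrier (H_in B A p j U))"
    and "inv_lim_zero T (H_in B A p j) (H_in_map B A p j)"
  shows "inv_lim_zero T (H_out B A p i j) (H_out_map B A p i j)"
proof -
  note Bg = assms(1) and Cg = assms(2) and sA = assms(3) and sT = assms(8) and dir = assms(9)
    and fin = assms(10) and lim = assms(11)
  have gh: "group_hom B C q" by (intro group_hom.intro group_hom_axioms.intro Bg Cg assms(4))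
  have N: "A \<lhd> B" using group_hom.normal_kernel[OF gh] assms(6) by simp
  have one: "\<forall>U\<in>T. \<one>\<^bsub>H_in B A p j U\<^esub> \<in> carrier (H_in B A p j U)"
    using Hin_comm[OF Bg sA] sT comm_group.axioms(2) group.is_monoid monoid.one_closed by metis
  show ?thesis unfolding inv_lim_zero_def
  proof (intro allI impI ballI)
    fix x U
    assume x: "(\<forall>U\<in>T. x U \<in> carrier (H_out B A p i j U)) \<and>
        (\<forall>U1\<in>T. \<forall>U2\<in>T. U1 \<subseteq> U2 \<longrightarrow> H_out_map B A p i j U1 U2 (x U1) = x U2)"
      and U: "U \<in> T"
    obtain V where V: "V \<in> T" "V \<subseteq> U" "\<forall>y\<in>carrier (H_in B A p j V). H_in_map B A p j V U y = \<one>\<^bsub>H_in B A p j U\<^esub>"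
    proof -
      have "\<exists>V\<in>T. V \<subseteq> U \<and> (\<forall>y\<in>carrier (H_in B A p j V). H_in_map B A p j V U y = \<one>\<^bsub>H_in B A p j U\<^esub>)"
      proof (rule mittag_leffler_zero[OF dir fin one _ _ lim U])
        fix U1 U2 y assume "U1 \<in> T" "U2 \<in> T" "U1 \<subseteq> U2" "y \<in> carrier (H_in B A p j U1)"
        then show "H_in_map B A p j U1 U2 y \<in> carrier (H_in B A p j U2)"
          using Hin_map_closed[OF Bg sA] sT by blast
      next
        fix U1 U2 U3 y assume "U1 \<in> T" "U2 \<in> T" "U3 \<in> T" "U1 \<subseteq> U2" "U2 \<subseteq> U3" "y \<in> carrier (H_in B A p j U1)"
        then show "H_in_map B A p j U2 U3 (H_in_map B A p j U1 U2 y) = H_in_map B A p j U1 U3 y"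
          using Hin_map_comp[OF Bg sA] sT by blast
      qed
      then show ?thesis using that by blast
    qed
    have sU: "subgroup U B" and sV: "subgroup V B" using sT U V by auto
    have "x U = H_out_map B A p i j V U (x V)" using x U V by simp
    also have "\<dots> = \<one>\<^bsub>group_homology (Quo B A U) (H_in B A p j U) (conj_act B A p j U) i\<^esub>"
      unfolding H_out_map_def
    proof (rule out_zero)
      show "comm_group (H_in B A p j V)" by (rule Hin_comm[OF Bg sA sV])
      show "comm_group (H_in B A p j U)" by (rule Hin_comm[OF Bg sA sU])
      show "group (Quo B A V)" by (rule Quo_group[OF Bg sA sV N])
      show "group (Quo B A U)" by (rule Quo_group[OF Bg sA sU N])
      show "\<And>c m. c \<in> carrier (Quo B A V) \<Longrightarrow> m \<in> carrier (H_in B A p j V) \<Longrightarrow>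
               conj_act B A p j V c m \<in> carrier (H_in B A p j V)"
        by (rule conj_closed[OF Bg sA sV N])
      show "\<And>c m. c \<in> carrier (Quo B A U) \<Longrightarrow> m \<in> carrier (H_in B A p j U) \<Longrightarrow>
               conj_act B A p j U c m \<in> carrier (H_in B A p j U)"
        by (rule conj_closed[OF Bg sA sU N])
      show "\<And>m. m \<in> carrier (H_in B A p j V) \<Longrightarrow> H_in_map B A p j V U m = \<one>\<^bsub>H_in B A p j U\<^esub>"
        using V(3) by blast
      show "x V \<in> carrier (group_homology (Quo B A V) (H_in B A p j V) (conj_act B A p j V) i)"
        using x V(1) by (simp add: H_out_def)
    qed
    also have "\<dots> = \<one>\<^bsub>H_out B A p i j U\<^esub>" by (simp add: H_out_def)
    finally show "x U = \<one>\<^bsub>H_out B A p i j U\<^esub>" .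
  qed
qed

end
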